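(* Let $\mathcal G$ be a shortest-path game such that $\mathrm{Val}^{\mathrm d}(v)\notin\{-\infty,+\infty\}$ and $\overline{\mathrm{Val}}^{\mathrm m}(v)\neq+\infty$ for all vertices $v$. The following are equivalent: (1) Min has an optimal memoryless deterministic strategy, i.e. a memoryless deterministic $\sigma^*$ with $\mathrm{Val}^{\sigma^*}(v)=\mathrm{Val}^{\mathrm d}(v)$ for all $v$; (2) Min has an optimal memoryless (randomised) strategy, i.e. a memoryless $\rho^*$ with $\mathrm{Val}^{\mathrm m,\rho^*}(v)=\overline{\mathrm{Val}}^{\mathrm m}(v)$ for all $v$; (3) $f^{(|V|-1)}_v=f^{(|V|)}_v=\mathrm{Val}^{\mathrm d}(v)$ for all vertices $v$, and in the game graph $\widetilde{\mathcal G}^{(|V|-1)}$ Min has a strategy guaranteeing to reach $T$ from every vertex, against every strategy of Max.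
   Context: A shortest-path game is $\mathcal G=(V_{\mathrm{Max}},V_{\mathrm{Min}},T,E,w)$ with finite $V=V_{\mathrm{Max}}\uplus V_{\mathrm{Min}}\uplus T$, edges $E\subseteq (V\setminus T)\times V$ with every non-target vertex having a successor, and integer weights $w\colon E\to\mathbb Z$. Plays from $v$ are finite paths ending at their first visit to $T$ (total payoff $\mathrm{TP}$ = sum of weights) or infinite paths avoiding $T$ ($\mathrm{TP}=+\infty$). Strategies of Min (resp. Max) map finite paths ending in $V_{\mathrm{Min}}$ (resp. $V_{\mathrm{Max}}$) to distributions on successors of the last vertex; deterministic = always Dirac, memoryless = depends only on the last vertex. For deterministic $\sigma,\tau$, $\mathrm{Val}^\sigma(v)=\sup_\tau\mathrm{TP}$ of the unique conforming play (over deterministic $\tau$), $\mathrm{Val}^{\mathrm d}(v)=\inf_\sigma\mathrm{Val}^\sigma(v)$. For memoryless $\rho,\tau$, $\mathbb E^{\rho,\tau}_v(\mathrm{TP})$ is the expected total payoff in the induced Markov chain; $\mathrm{Val}^{\mathrm m,\rho}(v)=\sup_\tau\mathbb E^{\rho,\tau}_v(\mathrm{TP})$ over memoryless $\tau$, $\overline{\mathrm{Val}}^{\mathrm m}(v)=\inf_\rho\mathrm{Val}^{\mathrm m,\rho}(v)$. Define $\mathcal F\colon(\mathbb Z\cup\{+\infty\})^V\to(\mathbb Z\cup\{+\infty\})^V$ by $\mathcal F(x)_v=0$ if $v\in T$, $\min_{v'\in E(v)}(w(v,v')+x_{v'})$ if $v\in V_{\mathrm{Min}}$, and $\max_{v'\in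 E(v)}(w(v,v')+x_{v'})$ if $v\in V_{\mathrm{Max}}$. Let $f^{(0)}_v=0$ for $v\in T$ and $+\infty$ otherwise, and $f^{(i)}=\mathcal F^i(f^{(0)})$. For $i\ge1$ and $v\in V_{\mathrm{Min}}$ let $\widetilde E^{(i)}(v)=\{v'\in E(v)\mid w(v,v')+f^{(i-1)}_{v'}=f^{(i)}_v\}$, and let $\widetilde{\mathcal G}^{(i)}$ be the game graph obtained from $\mathcal G$ by removing all edges $(v,v')$ with $v\in V_{\mathrm{Min}}$ and $v'\notin\widetilde E^{(i)}(v)$. *)

theory Defs
  imports "HOL-Probability.Probability"
begin

definition sp_game :: "'v set \<Rightarrow> 'v set \<Rightarrow> 'v set \<Rightarrow> ('v \<times> 'v) set \<Rightarrow> bool" where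
  "sp_game VMax VMin T E \<longleftrightarrow>
     VMax \<inter> VMin = {} \<and> VMax \<inter> T = {} \<and> VMin \<inter> T = {} \<and>
     VMax \<union> VMin \<union> T = UNIV \<and>
     E \<subseteq> (- T) \<times> UNIV \<and> (\<forall>v. v \<notin> T \<longrightarrow> E `` {v} \<noteq> {})"

definition det_strat :: "'v set \<Rightarrow> ('v \<times> 'v) set \<Rightarrow> ('v list \<Rightarrow> 'v) \<Rightarrow> bool" where
  "det_strat Vown E \<sigma> \<longleftrightarrow> (\<forall>h. h \<noteq> [] \<and> last h \<in> Vown \<longrightarrow> (last h, \<sigma> h) \<in> E)"

definition memoryless_det :: "('v list \<Rightarrow> 'v) \<Rightarrow> bool" where
  "memoryless_det \<sigma> \<longleftrightarrow> (\<exists>s. \<forall>h. h \<noteq> [] \<longrightarrow> \<sigma> h = s (last h))"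

fun play_hist :: "'v set \<Rightarrow> ('v list \<Rightarrow> 'v) \<Rightarrow> ('v list \<Rightarrow> 'v) \<Rightarrow> 'v \<Rightarrow> nat \<Rightarrow> 'v list" where
  "play_hist VMin \<sigma> \<tau> v 0 = [v]"
| "play_hist VMin \<sigma> \<tau> v (Suc n) =
     (let h = play_hist VMin \<sigma> \<tau> v n in h @ [if last h \<in> VMin then \<sigma> h else \<tau> h])"

definition play_vertex :: "'v set \<Rightarrow> ('v list \<Rightarrow> 'v) \<Rightarrow> ('v list \<Rightarrow> 'v) \<Rightarrow> 'v \<Rightarrow> nat \<Rightarrow> 'v" where
  "play_vertex VMin \<sigma> \<tau> v n = last (play_hist VMin \<sigma> \<tau> v n)"

definition TP_det :: "'v set \<Rightarrow> 'v set \<Rightarrow> ('v \<Rightarrow> 'v \<Rightarrow> int)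
    \<Rightarrow> ('v list \<Rightarrow> 'v) \<Rightarrow> ('v list \<Rightarrow> 'v) \<Rightarrow> 'v \<Rightarrow> ereal" where
  "TP_det VMin T w \<sigma> \<tau> v =
     (let p = play_vertex VMin \<sigma> \<tau> v in
      if \<exists>n. p n \<in> T
      then ereal (of_int (\<Sum>i < (LEAST n. p n \<in> T). w (p i) (p (Suc i))))
      else \<infinity>)"

definition Val_sigma :: "'v set \<Rightarrow> 'v set \<Rightarrow> 'v set \<Rightarrow> ('v \<times> 'v) set \<Rightarrow> ('v \<Rightarrow> 'v \<Rightarrow> int)
    \<Rightarrow> ('v list \<Rightarrow> 'v) \<Rightarrow> 'v \<Rightarrow> ereal" where
  "Val_sigma VMax VMin T E w \<sigma> v = (SUP \<tau> \<in> {\<tau>. det_strat VMax E \<tau>}. TP_det VMin T w \<sigma> \<tau> v)"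

definition Val_d :: "'v set \<Rightarrow> 'v set \<Rightarrow> 'v set \<Rightarrow> ('v \<times> 'v) set \<Rightarrow> ('v \<Rightarrow> 'v \<Rightarrow> int)
    \<Rightarrow> 'v \<Rightarrow> ereal" where
  "Val_d VMax VMin T E w v = (INF \<sigma> \<in> {\<sigma>. det_strat VMin E \<sigma>}. Val_sigma VMax VMin T E w \<sigma> v)"

definition mless_strat :: "'v set \<Rightarrow> ('v \<times> 'v) set \<Rightarrow> ('v \<Rightarrow> 'v pmf) \<Rightarrow> bool" where
  "mless_strat Vown E \<rho> \<longleftrightarrow> (\<forall>v \<in> Vown. set_pmf (\<rho> v) \<subseteq> E `` {v})"

definition fplays :: "'v set \<Rightarrow> ('v \<times> 'v) set \<Rightarrow> 'v \<Rightarrow> 'v list set" where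
  "fplays T E v = {\<pi>. \<pi> \<noteq> [] \<and> hd \<pi> = v \<and> last \<pi> \<in> T \<and>
      (\<forall>i < length \<pi> - 1. \<pi> ! i \<notin> T \<and> (\<pi> ! i, \<pi> ! Suc i) \<in> E)}"

definition path_prob :: "'v set \<Rightarrow> ('v \<Rightarrow> 'v pmf) \<Rightarrow> ('v \<Rightarrow> 'v pmf) \<Rightarrow> 'v list \<Rightarrow> real" where
  "path_prob VMin \<rho> \<tau> \<pi> =
     (\<Prod>i < length \<pi> - 1. pmf (if \<pi> ! i \<in> VMin then \<rho> (\<pi> ! i) else \<tau> (\<pi> ! i)) (\<pi> ! Suc i))"

definition path_weight :: "('v \<Rightarrow> 'v \<Rightarrow> int) \<Rightarrow> 'v list \<Rightarrow> int" where
  "path_weight w \<pi> = (\<Sum>i < length \<pi> - 1. w (\<pi> ! i) (\<pi> ! Suc i))"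

definition reach_prob :: "'v set \<Rightarrow> 'v set \<Rightarrow> ('v \<times> 'v) set
    \<Rightarrow> ('v \<Rightarrow> 'v pmf) \<Rightarrow> ('v \<Rightarrow> 'v pmf) \<Rightarrow> 'v \<Rightarrow> ennreal" where
  "reach_prob VMin T E \<rho> \<tau> v =
     (\<integral>\<^sup>+ \<pi>. ennreal (path_prob VMin \<rho> \<tau> \<pi>) \<partial>count_space (fplays T E v))"

text \<open>Expected total payoff (TP = +\<infinity> on plays never reaching T): +\<infinity> if T is
  reached with probability < 1, otherwise the expectation of the payoff of the
  (almost surely finite) play, as positive part minus negative part.\<close>

definition exp_TP :: "'v set \<Rightarrow> 'v set \<Rightarrow> ('v \<times> 'v) set \<Rightarrow> ('v \<Rightarrow> 'v \<Rightarrow> int)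
    \<Rightarrow> ('v \<Rightarrow> 'v pmf) \<Rightarrow> ('v \<Rightarrow> 'v pmf) \<Rightarrow> 'v \<Rightarrow> ereal" where
  "exp_TP VMin T E w \<rho> \<tau> v =
     (if reach_prob VMin T E \<rho> \<tau> v < 1 then \<infinity>
      else enn2ereal (\<integral>\<^sup>+ \<pi>. ennreal (path_prob VMin \<rho> \<tau> \<pi> * max 0 (real_of_int (path_weight w \<pi>)))
                        \<partial>count_space (fplays T E v))
         - enn2ereal (\<integral>\<^sup>+ \<pi>. ennreal (path_prob VMin \<rho> \<tau> \<pi> * max 0 (- real_of_int (path_weight w \<pi>)))
                        \<partial>count_space (fplays T E v)))"

definition Val_m_rho :: "'v set \<Rightarrow> 'v set \<Rightarrow> 'v set \<Rightarrow> ('v \<times> 'v) set \<Rightarrow> ('v \<Rightarrow> 'v \<Rightarrow> int)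
    \<Rightarrow> ('v \<Rightarrow> 'v pmf) \<Rightarrow> 'v \<Rightarrow> ereal" where
  "Val_m_rho VMax VMin T E w \<rho> v = (SUP \<tau> \<in> {\<tau>. mless_strat VMax E \<tau>}. exp_TP VMin T E w \<rho> \<tau> v)"

definition Val_m_bar :: "'v set \<Rightarrow> 'v set \<Rightarrow> 'v set \<Rightarrow> ('v \<times> 'v) set \<Rightarrow> ('v \<Rightarrow> 'v \<Rightarrow> int)
    \<Rightarrow> 'v \<Rightarrow> ereal" where
  "Val_m_bar VMax VMin T E w v = (INF \<rho> \<in> {\<rho>. mless_strat VMin E \<rho>}. Val_m_rho VMax VMin T E w \<rho> v)"

definition F_op :: "'v set \<Rightarrow> 'v set \<Rightarrow> ('v \<times> 'v) set \<Rightarrow> ('v \<Rightarrow> 'v \<Rightarrow> int)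
    \<Rightarrow> ('v \<Rightarrow> ereal) \<Rightarrow> 'v \<Rightarrow> ereal" where
  "F_op VMin T E w x v =
     (if v \<in> T then 0
      else if v \<in> VMin then Min ((\<lambda>v'. ereal (of_int (w v v')) + x v') ` (E `` {v}))
      else Max ((\<lambda>v'. ereal (of_int (w v v')) + x v') ` (E `` {v})))"

definition f_iter :: "'v set \<Rightarrow> 'v set \<Rightarrow> ('v \<times> 'v) set \<Rightarrow> ('v \<Rightarrow> 'v \<Rightarrow> int)
    \<Rightarrow> nat \<Rightarrow> 'v \<Rightarrow> ereal" where
  "f_iter VMin T E w i = (F_op VMin T E w ^^ i) (\<lambda>v. if v \<in> T then 0 else \<infinity>)"

definition Etilde :: "'v set \<Rightarrow> 'v set \<Rightarrow> ('v \<times> 'v) set \<Rightarrow> ('v \<Rightarrow> 'v \<Rightarrow> int)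
    \<Rightarrow> nat \<Rightarrow> 'v \<Rightarrow> 'v set" where
  "Etilde VMin T E w i v =
     {v' \<in> E `` {v}. ereal (of_int (w v v')) + f_iter VMin T E w (i - 1) v' = f_iter VMin T E w i v}"

definition Gtilde_edges :: "'v set \<Rightarrow> 'v set \<Rightarrow> ('v \<times> 'v) set \<Rightarrow> ('v \<Rightarrow> 'v \<Rightarrow> int)
    \<Rightarrow> nat \<Rightarrow> ('v \<times> 'v) set" where
  "Gtilde_edges VMin T E w i = {(v, v') \<in> E. v \<in> VMin \<longrightarrow> v' \<in> Etilde VMin T E w i v}"

end

theory Submission
  imports Defs
begin


lemma play_hist_Suc_eq:
  "play_hist VMin \<sigma> \<tau> v (Suc n) = play_hist VMin \<sigma> \<tau> v n @ [play_vertex VMin \<sigma> \<tau> v (Suc n)]"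
  by (simp add: play_vertex_def Let_def)

lemma play_vertex_0[simp]: "play_vertex VMin \<sigma> \<tau> v 0 = v"
  by (simp add: play_vertex_def)

lemma last_play_hist: "last (play_hist VMin \<sigma> \<tau> v n) = play_vertex VMin \<sigma> \<tau> v n"
  by (simp add: play_vertex_def)

lemma play_hist_ne[simp]: "play_hist VMin \<sigma> \<tau> v n \<noteq> []"
  by (cases n) (simp_all add: Let_def)

lemma length_play_hist[simp]: "length (play_hist VMin \<sigma> \<tau> v n) = Suc n"
  by (induction n) (simp_all add: Let_def)

lemma play_vertex_Suc:
  "play_vertex VMin \<sigma> \<tau> v (Suc n) =
    (if play_vertex VMin \<sigma> \<tau> v n \<in> VMin then \<sigma> (play_hist VMin \<sigma> \<tau> v n) else \<tau> (play_hist VMin \<sigma> \<tau> v n))"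
  by (simp add: play_vertex_def Let_def)

lemma TP_hit:
  assumes "play_vertex VMin \<sigma> \<tau> v N \<in> T" "\<forall>j<N. play_vertex VMin \<sigma> \<tau> v j \<notin> T"
  shows "TP_det VMin T w \<sigma> \<tau> v =
     ereal (of_int (\<Sum>i<N. w (play_vertex VMin \<sigma> \<tau> v i) (play_vertex VMin \<sigma> \<tau> v (Suc i))))"
proof -
  have L: "(LEAST n. play_vertex VMin \<sigma> \<tau> v n \<in> T) = N"
    using assms by (intro Least_equality) (auto simp: not_le[symmetric])
  show ?thesis unfolding TP_det_def Let_def using assms L by auto
qed

lemma TP_nohit:
  assumes "\<forall>n. play_vertex VMin \<sigma> \<tau> v n \<notin> T"
  shows "TP_det VMin T w \<sigma> \<tau> v = \<infinity>"
  using assms unfolding TP_det_def Let_def by auto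

lemma hit_by_rank:
  fixes p :: "nat \<Rightarrow> 'v" and rk :: "'v \<Rightarrow> nat"
  assumes rk0: "\<forall>x. rk x = 0 \<longleftrightarrow> x \<in> T"
    and dec: "\<forall>j. p j \<notin> T \<longrightarrow> rk (p (Suc j)) < rk (p j)"
  shows "\<exists>N \<le> rk (p 0). p N \<in> T \<and> (\<forall>j<N. p j \<notin> T)"
proof -
  have A: "(\<forall>i<j. p i \<notin> T) \<longrightarrow> rk (p j) + j \<le> rk (p 0)" for j
  proof (induction j)
    case 0 then show ?case by simp
  next
    case (Suc j)
    then show ?case using dec by (metis Suc_leI add_Suc_right add_less_mono1 less_Suc_eq order_less_le_trans)
  qed
  have "\<exists>i\<le>rk (p 0). p i \<in> T"
  proof (rule ccontr)
    assume "\<not> ?thesis"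
    then have "\<forall>i<Suc (rk (p 0)). p i \<notin> T" by auto
    then have "rk (p (Suc (rk (p 0)))) + Suc (rk (p 0)) \<le> rk (p 0)" using A by blast
    then show False by simp
  qed
  then obtain i where i: "i \<le> rk (p 0)" "p i \<in> T" by blast
  define N where "N = (LEAST n. p n \<in> T)"
  have "p N \<in> T" unfolding N_def using i by (metis LeastI)
  moreover have "N \<le> i" unfolding N_def using i by (simp add: Least_le)
  moreover have "\<forall>j<N. p j \<notin> T" unfolding N_def using not_less_Least by blast
  ultimately show ?thesis using i by (intro exI[of _ N]) auto
qed

lemma tele_upper:
  fixes p :: "nat \<Rightarrow> 'v" and \<phi> :: "'v \<Rightarrow> real" and w :: "'v \<Rightarrow> 'v \<Rightarrow> int"
  assumes "\<forall>j<N. real_of_int (w (p j) (p (Suc j))) + \<phi> (p (Suc j)) \<le> \<phi> (p j)"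
  shows "real_of_int (\<Sum>j<N. w (p j) (p (Suc j))) + \<phi> (p N) \<le> \<phi> (p 0)"
  using assms
proof (induction N)
  case 0 then show ?case by simp
next
  case (Suc N)
  then have "real_of_int (\<Sum>j<N. w (p j) (p (Suc j))) + \<phi> (p N) \<le> \<phi> (p 0)" by auto
  moreover have "real_of_int (w (p N) (p (Suc N))) + \<phi> (p (Suc N)) \<le> \<phi> (p N)" using Suc.prems by auto
  ultimately show ?case by simp
qed

lemma tele_lower:
  fixes p :: "nat \<Rightarrow> 'v" and \<phi> :: "'v \<Rightarrow> real" and w :: "'v \<Rightarrow> 'v \<Rightarrow> int"
  assumes "\<forall>j<N. \<phi> (p j) \<le> real_of_int (w (p j) (p (Suc j))) + \<phi> (p (Suc j))"
  shows "\<phi> (p 0) \<le> real_of_int (\<Sum>j<N. w (p j) (p (Suc j))) + \<phi> (p N)"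
  using assms
proof (induction N)
  case 0 then show ?case by simp
next
  case (Suc N)
  then have "\<phi> (p 0) \<le> real_of_int (\<Sum>j<N. w (p j) (p (Suc j))) + \<phi> (p N)" by auto
  moreover have "\<phi> (p N) \<le> real_of_int (w (p N) (p (Suc N))) + \<phi> (p (Suc N))" using Suc.prems by auto
  ultimately show ?case by simp
qed

fun attr :: "'v set \<Rightarrow> 'v set \<Rightarrow> ('v \<times> 'v) set \<Rightarrow> ('v \<Rightarrow> 'v set) \<Rightarrow> nat \<Rightarrow> 'v set" where
  "attr VMin T E C 0 = T"
| "attr VMin T E C (Suc k) = attr VMin T E C k \<union> {u \<in> VMin. C u \<inter> attr VMin T E C k \<noteq> {}}
      \<union> {x. x \<notin> VMin \<and> x \<notin> T \<and> E `` {x} \<subseteq> attr VMin T E C k}"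

locale spg =
  fixes VMax VMin T :: "'v::finite set" and E :: "('v \<times> 'v) set" and w :: "'v \<Rightarrow> 'v \<Rightarrow> int"
  assumes game: "sp_game VMax VMin T E"
begin

lemma VMax_iff: "x \<in> VMax \<longleftrightarrow> x \<notin> VMin \<and> x \<notin> T"
  using game unfolding sp_game_def by blast

lemma VMin_notT: "x \<in> VMin \<Longrightarrow> x \<notin> T"
  using game unfolding sp_game_def by blast

lemma succ_ex: "x \<notin> T \<Longrightarrow> \<exists>y. (x, y) \<in> E"
  using game unfolding sp_game_def by blast

lemma E_src: "(x, y) \<in> E \<Longrightarrow> x \<notin> T"
  using game unfolding sp_game_def by blast

lemma play_edge:
  assumes "det_strat VMin E \<sigma>" "det_strat VMax E \<tau>" "play_vertex VMin \<sigma> \<tau> v n \<notin> T"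
  shows "(play_vertex VMin \<sigma> \<tau> v n, play_vertex VMin \<sigma> \<tau> v (Suc n)) \<in> E"
proof -
  let ?h = "play_hist VMin \<sigma> \<tau> v n"
  have h: "?h \<noteq> []" "last ?h = play_vertex VMin \<sigma> \<tau> v n" by (simp_all add: last_play_hist)
  show ?thesis
  proof (cases "play_vertex VMin \<sigma> \<tau> v n \<in> VMin")
    case True
    have "(last ?h, \<sigma> ?h) \<in> E" using spec[OF assms(1)[unfolded det_strat_def], of ?h] True h by simp
    then show ?thesis using True h by (simp add: play_vertex_Suc)
  next
    case False
    then have "play_vertex VMin \<sigma> \<tau> v n \<in> VMax" using assms(3) VMax_iff by simp
    then have "(last ?h, \<tau> ?h) \<in> E" using spec[OF assms(2)[unfolded det_strat_def], of ?h] h by simp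
    then show ?thesis using False h by (simp add: play_vertex_Suc)
  qed
qed

lemma attractor:
  fixes C :: "'v \<Rightarrow> 'v set"
  assumes noTrap: "\<And>X. X \<subseteq> - T \<Longrightarrow> (\<forall>u\<in>X \<inter> VMin. C u \<subseteq> X) \<Longrightarrow> (\<forall>x\<in>X - VMin. \<exists>y\<in>X. (x, y) \<in> E) \<Longrightarrow> X = {}"
  shows "\<exists>rk s. (\<forall>x. rk x = 0 \<longleftrightarrow> x \<in> T) \<and> (\<forall>x. rk x < CARD('v))
     \<and> (\<forall>u\<in>VMin. s u \<in> C u \<and> rk (s u) < rk u)
     \<and> (\<forall>x. x \<notin> VMin \<longrightarrow> x \<notin> T \<longrightarrow> (\<forall>y. (x, y) \<in> E \<longrightarrow> rk y < rk x))"
proof -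
  let ?A = "attr VMin T E C"
  have monoS: "?A k \<subseteq> ?A (Suc k)" for k by auto
  have mono: "k \<le> m \<Longrightarrow> ?A k \<subseteq> ?A m" for k m
    using lift_Suc_mono_le[of ?A, OF monoS] by blast
  define X where "X = {x. \<forall>k. x \<notin> ?A k}"
  have "X \<subseteq> - T" unfolding X_def by (auto dest: spec[of _ 0])
  moreover have "\<forall>u\<in>X \<inter> VMin. C u \<subseteq> X"
  proof (intro ballI subsetI)
    fix u y assume u: "u \<in> X \<inter> VMin" and y: "y \<in> C u"
    show "y \<in> X"
    proof (rule ccontr)
      assume "y \<notin> X" then obtain k where "y \<in> ?A k" unfolding X_def by auto
      then have "u \<in> ?A (Suc k)" using u y by auto
      then show False using u unfolding X_def by blast
    qed
  qed
  moreover have "\<forall>x\<in>X - VMin. \<exists>y\<in>X. (x, y) \<in> E"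
  proof
    fix x assume x: "x \<in> X - VMin"
    show "\<exists>y\<in>X. (x, y) \<in> E"
    proof (rule ccontr)
      assume "\<not> ?thesis"
      then have H: "\<forall>y\<in>E `` {x}. \<exists>k. y \<in> ?A k" unfolding X_def by auto
      define K where "K = Max ((\<lambda>y. LEAST k. y \<in> ?A k) ` (E `` {x}))"
      have "E `` {x} \<subseteq> ?A K"
      proof
        fix y assume y: "y \<in> E `` {x}"
        then have "y \<in> ?A (LEAST k. y \<in> ?A k)" using H by (meson LeastI)
        moreover have "(LEAST k. y \<in> ?A k) \<le> K" unfolding K_def using y by (intro Max_ge) auto
        ultimately show "y \<in> ?A K" using mono by blast
      qed
      moreover have "x \<notin> T" using x \<open>X \<subseteq> - T\<close> by auto
      ultimately have "x \<in> ?A (Suc K)" using x by auto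
      then show False using x unfolding X_def by blast
    qed
  qed
  ultimately have "X = {}" using noTrap by blast
  then have allin: "\<exists>k. x \<in> ?A k" for x unfolding X_def by auto
  define rk where "rk x = (LEAST k. x \<in> ?A k)" for x
  have rkin: "x \<in> ?A (rk x)" for x unfolding rk_def using allin by (meson LeastI)
  have rkle: "x \<in> ?A k \<Longrightarrow> rk x \<le> k" for x k unfolding rk_def by (simp add: Least_le)
  have rk0: "rk x = 0 \<longleftrightarrow> x \<in> T" for x
    using rkin[of x] rkle[of x 0] by auto
  have rkS: "rk x = Suc r \<Longrightarrow> x \<notin> ?A r" for x r using rkle[of x r] by auto
  define s where "s u = (SOME y. y \<in> C u \<inter> ?A (rk u - 1))" for u
  have smin: "\<forall>u\<in>VMin. s u \<in> C u \<and> rk (s u) < rk u"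
  proof
    fix u assume u: "u \<in> VMin"
    then have "u \<notin> T" using VMin_notT by auto
    then obtain r where r: "rk u = Suc r" using rk0 by (metis not0_implies_Suc)
    then have "u \<in> ?A (Suc r)" "u \<notin> ?A r" using rkin rkS by metis+
    then have "C u \<inter> ?A r \<noteq> {}" using u by auto
    then have "\<exists>y. y \<in> C u \<inter> ?A r" by blast
    then have "s u \<in> C u \<inter> ?A r" unfolding s_def using r by (simp only: diff_Suc_1) (rule someI_ex)
    then show "s u \<in> C u \<and> rk (s u) < rk u" using rkle r by fastforce
  qed
  have smax: "\<forall>x. x \<notin> VMin \<longrightarrow> x \<notin> T \<longrightarrow> (\<forall>y. (x, y) \<in> E \<longrightarrow> rk y < rk x)"
  proof (intro allI impI)
    fix x y assume x: "x \<notin> VMin" "x \<notin> T" and y: "(x, y) \<in> E"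
    then obtain r where r: "rk x = Suc r" using rk0 by (metis not0_implies_Suc)
    then have "x \<in> ?A (Suc r)" "x \<notin> ?A r" using rkin rkS by metis+
    then have "E `` {x} \<subseteq> ?A r" using x by auto
    then show "rk y < rk x" using y rkle r by fastforce
  qed
  have Tne: "T \<noteq> {}"
  proof
    assume T0: "T = {}"
    have "?A k = {}" for k
    proof (induction k)
      case 0 then show ?case using T0 by simp
    next
      case (Suc k)
      have "\<not> E `` {x} \<subseteq> {}" if "x \<notin> T" for x using succ_ex[OF that] by auto
      then show ?case using Suc by auto
    qed
    then show False using rkin by blast
  qed
  have stable: "?A (Suc j) = ?A j \<Longrightarrow> ?A (j + d) = ?A j" for j d
  proof (induction d)
    case 0 then show ?case by simp
  next
    case (Suc d)
    then have "?A (j + d) = ?A j" by simp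
    then have "?A (Suc (j + d)) = ?A (Suc j)" by (simp only: attr.simps)
    then show ?case using Suc.prems by simp
  qed
  have bound: "rk x < CARD('v)" for x
  proof -
    have strict: "j < rk x \<Longrightarrow> ?A j \<subset> ?A (Suc j)" for j
    proof -
      assume j: "j < rk x"
      show "?A j \<subset> ?A (Suc j)"
      proof (rule ccontr)
        assume "\<not> ?A j \<subset> ?A (Suc j)"
        then have "?A (Suc j) = ?A j" using monoS by blast
        then have "?A (j + (rk x - j)) = ?A j" by (rule stable)
        then have "x \<in> ?A j" using rkin[of x] j by simp
        then show False using rkle j by fastforce
      qed
    qed
    have "j \<le> rk x \<Longrightarrow> j + card T \<le> card (?A j)" for j
    proof (induction j)
      case 0 then show ?case by simp
    next
      case (Suc j)
      then have "card (?A j) < card (?A (Suc j))" using strict by (intro psubset_card_mono) auto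
      then show ?case using Suc by simp
    qed
    then have "rk x + card T \<le> card (?A (rk x))" by simp
    moreover have "card (?A (rk x)) \<le> CARD('v)" by (rule card_mono) auto
    moreover have "card T \<ge> 1" using Tne by (simp add: Suc_leI card_gt_0_iff)
    ultimately show ?thesis by simp
  qed
  show ?thesis using rk0 bound smin smax by blast
qed

lemma trap_strategy:
  assumes "X \<subseteq> - T" "\<forall>x\<in>X - VMin. \<exists>y\<in>X. (x, y) \<in> E"
  shows "\<exists>\<tau>. det_strat VMax E \<tau> \<and> (\<forall>h. h \<noteq> [] \<longrightarrow> last h \<in> X \<longrightarrow> last h \<notin> VMin \<longrightarrow> \<tau> h \<in> X)"
proof -
  define \<tau> where "\<tau> h = (if last h \<in> X \<and> last h \<notin> VMin then (SOME y. y \<in> X \<and> (last h, y) \<in> E)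
     else (SOME y. (last h, y) \<in> E))" for h
  have "det_strat VMax E \<tau>"
    unfolding det_strat_def
  proof (intro allI impI)
    fix h :: "'v list" assume h: "h \<noteq> [] \<and> last h \<in> VMax"
    then have nT: "last h \<notin> T" "last h \<notin> VMin" using VMax_iff by auto
    show "(last h, \<tau> h) \<in> E"
    proof (cases "last h \<in> X")
      case True
      then have "\<exists>y. y \<in> X \<and> (last h, y) \<in> E" using assms nT by blast
      then have "(SOME y. y \<in> X \<and> (last h, y) \<in> E) \<in> X \<and> (last h, SOME y. y \<in> X \<and> (last h, y) \<in> E) \<in> E" by (rule someI_ex)
      then show ?thesis unfolding \<tau>_def using True nT by simp
    next
      case False
      have "(last h, SOME y. (last h, y) \<in> E) \<in> E" using succ_ex[OF nT(1)] by (rule someI_ex)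
      then show ?thesis unfolding \<tau>_def using False by simp
    qed
  qed
  moreover have "\<forall>h. h \<noteq> [] \<longrightarrow> last h \<in> X \<longrightarrow> last h \<notin> VMin \<longrightarrow> \<tau> h \<in> X"
  proof (intro allI impI)
    fix h :: "'v list" assume h: "h \<noteq> []" "last h \<in> X" "last h \<notin> VMin"
    then have "\<exists>y. y \<in> X \<and> (last h, y) \<in> E" using assms by blast
    then have "(SOME y. y \<in> X \<and> (last h, y) \<in> E) \<in> X \<and> (last h, SOME y. y \<in> X \<and> (last h, y) \<in> E) \<in> E" by (rule someI_ex)
    then show "\<tau> h \<in> X" unfolding \<tau>_def using h by simp
  qed
  ultimately show ?thesis by blast
qed

lemma play_stays:
  assumes "\<forall>h. h \<noteq> [] \<longrightarrow> last h \<in> X \<longrightarrow> last h \<in> VMin \<longrightarrow> \<sigma> h \<in> X"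
    and "\<forall>h. h \<noteq> [] \<longrightarrow> last h \<in> X \<longrightarrow> last h \<notin> VMin \<longrightarrow> \<tau> h \<in> X"
    and "v \<in> X"
  shows "play_vertex VMin \<sigma> \<tau> v n \<in> X"
proof (induction n)
  case 0 then show ?case using assms by simp
next
  case (Suc n)
  let ?h = "play_hist VMin \<sigma> \<tau> v n"
  have h: "?h \<noteq> []" "last ?h \<in> X" using Suc by (simp_all add: last_play_hist)
  show ?case
  proof (cases "play_vertex VMin \<sigma> \<tau> v n \<in> VMin")
    case True
    then have "\<sigma> ?h \<in> X" using assms(1) h by (simp add: last_play_hist)
    then show ?thesis using True by (simp add: play_vertex_Suc)
  next
    case False
    then have "\<tau> ?h \<in> X" using assms(2) h by (simp add: last_play_hist)
    then show ?thesis using False by (simp add: play_vertex_Suc)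
  qed
qed

end



context spg begin

lemma fin_E: "finite (E `` {x})" by simp

lemma f_Suc: "f_iter VMin T E w (Suc i) = F_op VMin T E w (f_iter VMin T E w i)"
  by (simp add: f_iter_def)

lemma f_0: "f_iter VMin T E w 0 x = (if x \<in> T then 0 else \<infinity>)"
  by (simp add: f_iter_def)

lemma f_T: "x \<in> T \<Longrightarrow> f_iter VMin T E w i x = 0"
  by (cases i) (simp_all add: f_0 f_Suc F_op_def)

lemma F_min_le:
  assumes "u \<in> VMin" "(u, y) \<in> E"
  shows "F_op VMin T E w a u \<le> ereal (of_int (w u y)) + a y"
  using assms VMin_notT[OF assms(1)] unfolding F_op_def by (auto intro!: Min_le)

lemma F_min_ex:
  assumes "u \<in> VMin"
  shows "\<exists>y. (u, y) \<in> E \<and> F_op VMin T E w a u = ereal (of_int (w u y)) + a y"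
proof -
  have nT: "u \<notin> T" using VMin_notT[OF assms] .
  have ne: "E `` {u} \<noteq> {}" using succ_ex[OF nT] by auto
  have "Min ((\<lambda>v'. ereal (of_int (w u v')) + a v') ` (E `` {u})) \<in> (\<lambda>v'. ereal (of_int (w u v')) + a v') ` (E `` {u})"
    using ne by (intro Min_in) auto
  then show ?thesis using nT assms unfolding F_op_def by auto
qed

lemma F_max_ge:
  assumes "x \<notin> VMin" "x \<notin> T" "(x, y) \<in> E"
  shows "ereal (of_int (w x y)) + a y \<le> F_op VMin T E w a x"
  using assms unfolding F_op_def by (auto intro!: Max_ge)

lemma F_max_ex:
  assumes "x \<notin> VMin" "x \<notin> T"
  shows "\<exists>y. (x, y) \<in> E \<and> F_op VMin T E w a x = ereal (of_int (w x y)) + a y"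
proof -
  have ne: "E `` {x} \<noteq> {}" using succ_ex[OF assms(2)] by auto
  have "Max ((\<lambda>v'. ereal (of_int (w x v')) + a v') ` (E `` {x})) \<in> (\<lambda>v'. ereal (of_int (w x v')) + a v') ` (E `` {x})"
    using ne by (intro Max_in) auto
  then show ?thesis using assms unfolding F_op_def by auto
qed

lemma F_mono:
  assumes "\<And>y. a y \<le> b y"
  shows "F_op VMin T E w a x \<le> F_op VMin T E w b x"
proof (cases "x \<in> T")
  case True then show ?thesis by (simp add: F_op_def)
next
  case nT: False
  show ?thesis
  proof (cases "x \<in> VMin")
    case True
    obtain y where y: "(x, y) \<in> E" "F_op VMin T E w b x = ereal (of_int (w x y)) + b y"
      using F_min_ex[OF True] by blast
    have "F_op VMin T E w a x \<le> ereal (of_int (w x y)) + a y" using F_min_le[OF True y(1)] .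
    also have "\<dots> \<le> ereal (of_int (w x y)) + b y" using assms by (simp add: add_left_mono)
    finally show ?thesis using y by simp
  next
    case False
    obtain y where y: "(x, y) \<in> E" "F_op VMin T E w a x = ereal (of_int (w x y)) + a y"
      using F_max_ex[OF False nT] by blast
    have "ereal (of_int (w x y)) + a y \<le> ereal (of_int (w x y)) + b y" using assms by (simp add: add_left_mono)
    also have "\<dots> \<le> F_op VMin T E w b x" using F_max_ge[OF False nT y(1)] .
    finally show ?thesis using y by simp
  qed
qed

lemma f_dec: "f_iter VMin T E w (Suc i) x \<le> f_iter VMin T E w i x"
proof (induction i arbitrary: x)
  case 0
  show ?case by (cases "x \<in> T") (simp_all add: f_T f_0)
next
  case (Suc i)
  show ?case unfolding f_Suc[of "Suc i"] f_Suc[of i] using Suc by (intro F_mono) (simp add: f_Suc)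
qed

lemma f_anti: "i \<le> j \<Longrightarrow> f_iter VMin T E w j x \<le> f_iter VMin T E w i x"
proof (induction j rule: dec_induct)
  case base then show ?case by simp
next
  case (step j) then show ?case using f_dec order_trans by blast
qed

definition sigk :: "nat \<Rightarrow> 'v list \<Rightarrow> 'v" where
  "sigk k h = (SOME y. (last h, y) \<in> E \<and> ereal (of_int (w (last h) y)) + f_iter VMin T E w (k - length h) y
       = f_iter VMin T E w (Suc (k - length h)) (last h))"

definition tauk :: "nat \<Rightarrow> 'v list \<Rightarrow> 'v" where
  "tauk k h = (SOME y. (last h, y) \<in> E \<and> ereal (of_int (w (last h) y)) + f_iter VMin T E w (k - length h) y
       = f_iter VMin T E w (Suc (k - length h)) (last h))"

lemma sigk:
  assumes "last h \<in> VMin"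
  shows "(last h, sigk k h) \<in> E \<and> ereal (of_int (w (last h) (sigk k h))) + f_iter VMin T E w (k - length h) (sigk k h)
       = f_iter VMin T E w (Suc (k - length h)) (last h)"
proof -
  have "\<exists>y. (last h, y) \<in> E \<and> ereal (of_int (w (last h) y)) + f_iter VMin T E w (k - length h) y
       = f_iter VMin T E w (Suc (k - length h)) (last h)"
    using F_min_ex[OF assms] unfolding f_Suc by metis
  then show ?thesis unfolding sigk_def by (rule someI_ex)
qed

lemma tauk:
  assumes "last h \<notin> VMin" "last h \<notin> T"
  shows "(last h, tauk k h) \<in> E \<and> ereal (of_int (w (last h) (tauk k h))) + f_iter VMin T E w (k - length h) (tauk k h)
       = f_iter VMin T E w (Suc (k - length h)) (last h)"
proof -
  have "\<exists>y. (last h, y) \<in> E \<and> ereal (of_int (w (last h) y)) + f_iter VMin T E w (k - length h) y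
       = f_iter VMin T E w (Suc (k - length h)) (last h)"
    using F_max_ex[OF assms] unfolding f_Suc by metis
  then show ?thesis unfolding tauk_def by (rule someI_ex)
qed

lemma sigk_strat: "det_strat VMin E (sigk k)"
  unfolding det_strat_def using sigk by blast

lemma tauk_strat: "det_strat VMax E (tauk k)"
  unfolding det_strat_def using tauk VMax_iff by blast

lemma sum_Suc_ereal:
  "ereal (of_int (\<Sum>i<Suc j. g i)) = ereal (of_int (\<Sum>i<j. g i)) + ereal (of_int (g j))"
  by simp

lemma sigk_TP:
  assumes tau: "det_strat VMax E \<tau>"
  shows "TP_det VMin T w (sigk k) \<tau> v \<le> f_iter VMin T E w k v"
proof -
  let ?p = "play_vertex VMin (sigk k) \<tau> v"
  let ?S = "\<lambda>j. ereal (of_int (\<Sum>i<j. w (?p i) (?p (Suc i))))"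
  let ?f = "f_iter VMin T E w"
  have claim: "j \<le> k \<longrightarrow> (\<forall>i<j. ?p i \<notin> T) \<longrightarrow> ?S j + ?f (k - j) (?p j) \<le> ?f k v" for j
  proof (induction j)
    case 0 then show ?case by simp
  next
    case (Suc j)
    show ?case
    proof (intro impI)
      assume jk: "Suc j \<le> k" and nT: "\<forall>i<Suc j. ?p i \<notin> T"
      then have IH: "?S j + ?f (k - j) (?p j) \<le> ?f k v" using Suc by auto
      have pj: "?p j \<notin> T" using nT by auto
      let ?h = "play_hist VMin (sigk k) \<tau> v j"
      have m: "k - length ?h = k - Suc j" "Suc (k - Suc j) = k - j" using jk by auto
      have step: "ereal (of_int (w (?p j) (?p (Suc j)))) + ?f (k - Suc j) (?p (Suc j)) \<le> ?f (k - j) (?p j)"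
      proof (cases "?p j \<in> VMin")
        case True
        then have "?p (Suc j) = sigk k ?h" by (simp add: play_vertex_Suc)
        then show ?thesis using sigk[of ?h k] True m by (simp add: last_play_hist)
      next
        case False
        have e: "(?p j, ?p (Suc j)) \<in> E" using play_edge[OF sigk_strat tau pj] .
        have "?f (k - j) (?p j) = F_op VMin T E w (?f (k - Suc j)) (?p j)" using m(2) f_Suc by metis
        then show ?thesis using F_max_ge[OF False pj e] by simp
      qed
      have "?S (Suc j) + ?f (k - Suc j) (?p (Suc j)) = ?S j + (ereal (of_int (w (?p j) (?p (Suc j)))) + ?f (k - Suc j) (?p (Suc j)))"
        by (simp only: sum_Suc_ereal add.assoc)
      also have "\<dots> \<le> ?S j + ?f (k - j) (?p j)" using step by (simp add: add_left_mono)
      also have "\<dots> \<le> ?f k v" using IH .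
      finally show "?S (Suc j) + ?f (k - Suc j) (?p (Suc j)) \<le> ?f k v" .
    qed
  qed
  show ?thesis
  proof (cases "?f k v = \<infinity>")
    case True then show ?thesis by simp
  next
    case fin: False
    show ?thesis
    proof (cases "\<exists>N\<le>k. ?p N \<in> T")
      case True
      define N where "N = (LEAST N. ?p N \<in> T)"
      obtain N0 where N0: "N0 \<le> k" "?p N0 \<in> T" using True by blast
      have N: "?p N \<in> T" unfolding N_def using N0 by (metis LeastI)
      have Nk: "N \<le> k" unfolding N_def using N0 by (meson Least_le order_trans)
      have bef: "\<forall>j<N. ?p j \<notin> T" unfolding N_def using not_less_Least by blast
      have "?S N + ?f (k - N) (?p N) \<le> ?f k v" using claim[of N] Nk bef by blast
      then have "?S N \<le> ?f k v" using f_T[OF N] by simp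
      then show ?thesis using TP_hit[OF N bef] by simp
    next
      case False
      then have "?S k + ?f 0 (?p k) \<le> ?f k v" using claim[of k] by auto
      then have "?f k v = \<infinity>" using False by (simp add: f_0)
      then show ?thesis using fin by simp
    qed
  qed
qed

lemma Val_d_le_f: "Val_d VMax VMin T E w v \<le> f_iter VMin T E w k v"
proof -
  have "Val_d VMax VMin T E w v \<le> Val_sigma VMax VMin T E w (sigk k) v"
    unfolding Val_d_def using sigk_strat by (intro INF_lower) simp
  also have "\<dots> \<le> f_iter VMin T E w k v"
    unfolding Val_sigma_def using sigk_TP by (intro SUP_least) simp
  finally show ?thesis .
qed

lemma tauk_TP:
  assumes sig: "det_strat VMin E \<sigma>"
    and N: "play_vertex VMin \<sigma> (tauk k) v N \<in> T" "\<forall>j<N. play_vertex VMin \<sigma> (tauk k) v j \<notin> T"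
    and Nk: "N \<le> k" and j0: "j0 \<le> N"
  shows "ereal (of_int (\<Sum>i<j0. w (play_vertex VMin \<sigma> (tauk k) v i) (play_vertex VMin \<sigma> (tauk k) v (Suc i))))
          + f_iter VMin T E w (k - j0) (play_vertex VMin \<sigma> (tauk k) v j0) \<le> TP_det VMin T w \<sigma> (tauk k) v"
proof -
  let ?p = "play_vertex VMin \<sigma> (tauk k) v"
  let ?S = "\<lambda>j. ereal (of_int (\<Sum>i<j. w (?p i) (?p (Suc i))))"
  let ?f = "f_iter VMin T E w"
  have claim: "j0 + d \<le> N \<longrightarrow> ?S j0 + ?f (k - j0) (?p j0) \<le> ?S (j0 + d) + ?f (k - (j0 + d)) (?p (j0 + d))" for d
  proof (induction d)
    case 0 then show ?case by simp
  next
    case (Suc d)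
    show ?case
    proof
      assume le: "j0 + Suc d \<le> N"
      let ?j = "j0 + d"
      have IH: "?S j0 + ?f (k - j0) (?p j0) \<le> ?S ?j + ?f (k - ?j) (?p ?j)" using Suc le by simp
      have pj: "?p ?j \<notin> T" using N(2) le by simp
      let ?h = "play_hist VMin \<sigma> (tauk k) v ?j"
      have m: "k - length ?h = k - Suc ?j" "Suc (k - Suc ?j) = k - ?j" using le Nk by auto
      have step: "?f (k - ?j) (?p ?j) \<le> ereal (of_int (w (?p ?j) (?p (Suc ?j)))) + ?f (k - Suc ?j) (?p (Suc ?j))"
      proof (cases "?p ?j \<in> VMin")
        case True
        have e: "(?p ?j, ?p (Suc ?j)) \<in> E" using play_edge[OF sig tauk_strat pj] .
        have "?f (k - ?j) (?p ?j) = F_op VMin T E w (?f (k - Suc ?j)) (?p ?j)" using m(2) f_Suc by metis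
        then show ?thesis using F_min_le[OF True e] by simp
      next
        case False
        then have "?p (Suc ?j) = tauk k ?h" by (simp add: play_vertex_Suc)
        then show ?thesis using tauk[of ?h k] False pj m by (simp add: last_play_hist)
      qed
      have "?S ?j + ?f (k - ?j) (?p ?j) \<le> ?S ?j + (ereal (of_int (w (?p ?j) (?p (Suc ?j)))) + ?f (k - Suc ?j) (?p (Suc ?j)))"
        using step by (simp add: add_left_mono)
      also have "\<dots> = ?S (Suc ?j) + ?f (k - Suc ?j) (?p (Suc ?j))"
        by (simp only: sum_Suc_ereal add.assoc)
      finally show "?S j0 + ?f (k - j0) (?p j0) \<le> ?S (j0 + Suc d) + ?f (k - (j0 + Suc d)) (?p (j0 + Suc d))"
        using IH by simp
    qed
  qed
  have "?S j0 + ?f (k - j0) (?p j0) \<le> ?S N + ?f (k - N) (?p N)" using claim[of "N - j0"] j0 by simp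
  also have "\<dots> = ?S N" using f_T[OF N(1)] by simp
  also have "\<dots> = TP_det VMin T w \<sigma> (tauk k) v" using TP_hit[OF N] by simp
  finally show ?thesis .
qed

end



context spg begin


lemma card_pos: "CARD('v) \<ge> 1"
  by (simp add: Suc_leI)

lemma Val_d_le_sigma: "det_strat VMin E \<sigma> \<Longrightarrow> Val_d VMax VMin T E w v \<le> Val_sigma VMax VMin T E w \<sigma> v"
  unfolding Val_d_def by (intro INF_lower) simp

lemma TP_le_sigma: "det_strat VMax E \<tau> \<Longrightarrow> TP_det VMin T w \<sigma> \<tau> v \<le> Val_sigma VMax VMin T E w \<sigma> v"
  unfolding Val_sigma_def by (intro SUP_upper) simp

lemma Gt_sub: "Gtilde_edges VMin T E w i \<subseteq> E"
  unfolding Gtilde_edges_def by auto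

lemma Gt_max: "x \<notin> VMin \<Longrightarrow> (x, y) \<in> Gtilde_edges VMin T E w i \<longleftrightarrow> (x, y) \<in> E"
  unfolding Gtilde_edges_def by auto

lemma det_strat_mono: "det_strat V A \<tau> \<Longrightarrow> A \<subseteq> B \<Longrightarrow> det_strat V B \<tau>"
  unfolding det_strat_def by blast

lemma one_to_three:
  assumes finV: "\<forall>v. Val_d VMax VMin T E w v \<noteq> -\<infinity> \<and> Val_d VMax VMin T E w v \<noteq> \<infinity>"
    and sig: "det_strat VMin E \<sigma>" "memoryless_det \<sigma>" "\<forall>v. Val_sigma VMax VMin T E w \<sigma> v = Val_d VMax VMin T E w v"
  shows "(\<forall>v. f_iter VMin T E w (CARD('v) - 1) v = Val_d VMax VMin T E w v
                \<and> f_iter VMin T E w CARD('v) v = Val_d VMax VMin T E w v)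
           \<and> (det_strat VMin (Gtilde_edges VMin T E w (CARD('v) - 1)) \<sigma> \<and>
                 (\<forall>v \<tau>. det_strat VMax (Gtilde_edges VMin T E w (CARD('v) - 1)) \<tau> \<longrightarrow>
                        (\<exists>n. play_vertex VMin \<sigma> \<tau> v n \<in> T)))"
proof -
  let ?V = "Val_d VMax VMin T E w"
  let ?f = "f_iter VMin T E w"
  obtain s where s: "\<And>h. h \<noteq> [] \<Longrightarrow> \<sigma> h = s (last h)" using sig(2) unfolding memoryless_det_def by blast
  have sE: "(u, s u) \<in> E" if "u \<in> VMin" for u
    using spec[OF sig(1)[unfolded det_strat_def], of "[u]"] s[of "[u]"] that by simp
  have "\<exists>rk s'. (\<forall>x. rk x = 0 \<longleftrightarrow> x \<in> T) \<and> (\<forall>x. rk x < CARD('v))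
     \<and> (\<forall>u\<in>VMin. s' u \<in> {s u} \<and> rk (s' u) < rk u)
     \<and> (\<forall>x. x \<notin> VMin \<longrightarrow> x \<notin> T \<longrightarrow> (\<forall>y. (x, y) \<in> E \<longrightarrow> rk y < rk x))"
  proof (rule attractor)
    fix X assume X: "X \<subseteq> - T" "\<forall>u\<in>X \<inter> VMin. {s u} \<subseteq> X" "\<forall>x\<in>X - VMin. \<exists>y\<in>X. (x, y) \<in> E"
    show "X = {}"
    proof (rule ccontr)
      assume "X \<noteq> {}" then obtain v where v: "v \<in> X" by blast
      obtain \<tau> where tau: "det_strat VMax E \<tau>" "\<forall>h. h \<noteq> [] \<longrightarrow> last h \<in> X \<longrightarrow> last h \<notin> VMin \<longrightarrow> \<tau> h \<in> X"
        using trap_strategy[OF X(1) X(3)] by blast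
      have "\<forall>h. h \<noteq> [] \<longrightarrow> last h \<in> X \<longrightarrow> last h \<in> VMin \<longrightarrow> \<sigma> h \<in> X" using X(2) s by auto
      then have "\<forall>n. play_vertex VMin \<sigma> \<tau> v n \<in> X" using play_stays tau(2) v by blast
      then have "TP_det VMin T w \<sigma> \<tau> v = \<infinity>" using X(1) by (intro TP_nohit) auto
      then have "Val_sigma VMax VMin T E w \<sigma> v = \<infinity>" using TP_le_sigma[OF tau(1), of \<sigma> v] by simp
      then show False using sig(3) finV by metis
    qed
  qed
  then obtain rk where rk0: "\<forall>x. rk x = 0 \<longleftrightarrow> x \<in> T" and rkb: "\<forall>x. rk x < CARD('v)"
    and rkmin: "\<forall>u\<in>VMin. rk (s u) < rk u" and rkmax: "\<forall>x. x \<notin> VMin \<longrightarrow> x \<notin> T \<longrightarrow> (\<forall>y. (x, y) \<in> E \<longrightarrow> rk y < rk x)"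
    by (metis singletonD)
  have hit: "\<exists>N \<le> rk v. play_vertex VMin \<sigma> \<tau> v N \<in> T \<and> (\<forall>j<N. play_vertex VMin \<sigma> \<tau> v j \<notin> T)"
    if tau: "det_strat VMax E \<tau>" for \<tau> v
  proof -
    let ?p = "play_vertex VMin \<sigma> \<tau> v"
    have "\<forall>j. ?p j \<notin> T \<longrightarrow> rk (?p (Suc j)) < rk (?p j)"
    proof (intro allI impI)
      fix j assume pj: "?p j \<notin> T"
      show "rk (?p (Suc j)) < rk (?p j)"
      proof (cases "?p j \<in> VMin")
        case True
        then have "?p (Suc j) = s (?p j)" using s by (simp add: play_vertex_Suc last_play_hist)
        then show ?thesis using rkmin True by simp
      next
        case False
        then show ?thesis using rkmax pj play_edge[OF sig(1) tau pj] by blast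
      qed
    qed
    from hit_by_rank[OF rk0 this] show ?thesis by simp
  qed
  have f_le: "?f (CARD('v) - 1) v \<le> ?V v" for v
  proof -
    obtain N where N: "N \<le> rk v" "play_vertex VMin \<sigma> (tauk (CARD('v) - 1)) v N \<in> T"
         "\<forall>j<N. play_vertex VMin \<sigma> (tauk (CARD('v) - 1)) v j \<notin> T"
      using hit[OF tauk_strat] by blast
    have "N \<le> CARD('v) - 1" using N(1) rkb[rule_format, of v] by simp
    from tauk_TP[OF sig(1) N(2,3) this, of 0]
    have "?f (CARD('v) - 1) v \<le> TP_det VMin T w \<sigma> (tauk (CARD('v) - 1)) v" by simp
    also have "\<dots> \<le> Val_sigma VMax VMin T E w \<sigma> v" by (rule TP_le_sigma[OF tauk_strat])
    finally show ?thesis using sig(3) by simp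
  qed
  have feq: "?f (CARD('v) - 1) v = ?V v \<and> ?f CARD('v) v = ?V v" for v
  proof -
    have "?f CARD('v) v \<le> ?f (CARD('v) - 1) v" using f_anti[of "CARD('v) - 1" "CARD('v)"] by simp
    moreover have "?V v \<le> ?f CARD('v) v" by (rule Val_d_le_f)
    ultimately show ?thesis using f_le[of v] by (meson antisym order_trans)
  qed
  have sGt: "det_strat VMin (Gtilde_edges VMin T E w (CARD('v) - 1)) \<sigma>"
    unfolding det_strat_def
  proof (intro allI impI)
    fix h :: "'v list" assume h: "h \<noteq> [] \<and> last h \<in> VMin"
    define u where "u = last h"
    have u: "u \<in> VMin" "u \<notin> T" using h VMin_notT unfolding u_def by auto
    have sh: "\<sigma> h = s u" using s h unfolding u_def by simp
    have "CARD('v) - 1 \<noteq> 0"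
    proof
      assume "CARD('v) - 1 = 0"
      then have "?f 0 u = ?V u" using feq[of u] by simp
      then show False using u(2) finV by (metis f_0)
    qed
    then obtain m where m: "CARD('v) - 1 = Suc m" by (metis not0_implies_Suc)
    have e: "(u, s u) \<in> E" using sE u by simp
    have le1: "?f (CARD('v) - 1) u \<le> ereal (of_int (w u (s u))) + ?f m (s u)"
      unfolding m f_Suc using F_min_le[OF u(1) e] .
    obtain N where N: "N \<le> rk u" "play_vertex VMin \<sigma> (tauk (CARD('v) - 1)) u N \<in> T"
         "\<forall>j<N. play_vertex VMin \<sigma> (tauk (CARD('v) - 1)) u j \<notin> T"
      using hit[OF tauk_strat] by blast
    have Nb: "N \<le> CARD('v) - 1" using N(1) rkb[rule_format, of u] by simp
    have N1: "1 \<le> N" using N(2) u(2) by (cases N) auto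
    have p1: "play_vertex VMin \<sigma> (tauk (CARD('v) - 1)) u 1 = s u"
      using u(1) s[of "[u]"] by (simp add: play_vertex_Suc)
    have m2: "CARD('v) - 1 - 1 = m" using m by simp
    from tauk_TP[OF sig(1) N(2,3) Nb N1]
    have "ereal (of_int (w u (s u))) + ?f m (s u) \<le> TP_det VMin T w \<sigma> (tauk (CARD('v) - 1)) u"
      using p1 m2 by simp
    also have "\<dots> \<le> Val_sigma VMax VMin T E w \<sigma> u" by (rule TP_le_sigma[OF tauk_strat])
    also have "\<dots> = ?f (CARD('v) - 1) u" using sig(3) feq by simp
    finally have "ereal (of_int (w u (s u))) + ?f (CARD('v) - 1 - 1) (s u) = ?f (CARD('v) - 1) u"
      using le1 m by simp
    then show "(last h, \<sigma> h) \<in> Gtilde_edges VMin T E w (CARD('v) - 1)"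
      unfolding Gtilde_edges_def Etilde_def using e sh u_def by simp
  qed
  have reach: "\<exists>n. play_vertex VMin \<sigma> \<tau> v n \<in> T"
    if "det_strat VMax (Gtilde_edges VMin T E w (CARD('v) - 1)) \<tau>" for v \<tau>
  proof -
    have "det_strat VMax E \<tau>" using det_strat_mono[OF that Gt_sub] .
    then show ?thesis using hit by blast
  qed
  show ?thesis using feq sGt reach by blast
qed

lemma three_to_one:
  assumes finV: "\<forall>v. Val_d VMax VMin T E w v \<noteq> -\<infinity> \<and> Val_d VMax VMin T E w v \<noteq> \<infinity>"
    and feq: "\<forall>v. f_iter VMin T E w (CARD('v) - 1) v = Val_d VMax VMin T E w v
                \<and> f_iter VMin T E w CARD('v) v = Val_d VMax VMin T E w v"
    and sG: "det_strat VMin (Gtilde_edges VMin T E w (CARD('v) - 1)) \<sigma>G"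
    and reachG: "\<forall>v \<tau>. det_strat VMax (Gtilde_edges VMin T E w (CARD('v) - 1)) \<tau> \<longrightarrow>
                        (\<exists>n. play_vertex VMin \<sigma>G \<tau> v n \<in> T)"
  shows "\<exists>\<sigma>. det_strat VMin E \<sigma> \<and> memoryless_det \<sigma> \<and>
            (\<forall>v. Val_sigma VMax VMin T E w \<sigma> v = Val_d VMax VMin T E w v)"
proof -
  let ?V = "Val_d VMax VMin T E w"
  let ?f = "f_iter VMin T E w"
  let ?G = "Gtilde_edges VMin T E w (CARD('v) - 1)"
  have "\<exists>rk s. (\<forall>x. rk x = 0 \<longleftrightarrow> x \<in> T) \<and> (\<forall>x. rk x < CARD('v))
     \<and> (\<forall>u\<in>VMin. s u \<in> ?G `` {u} \<and> rk (s u) < rk u)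
     \<and> (\<forall>x. x \<notin> VMin \<longrightarrow> x \<notin> T \<longrightarrow> (\<forall>y. (x, y) \<in> E \<longrightarrow> rk y < rk x))"
  proof (rule attractor)
    fix X assume X: "X \<subseteq> - T" "\<forall>u\<in>X \<inter> VMin. ?G `` {u} \<subseteq> X" "\<forall>x\<in>X - VMin. \<exists>y\<in>X. (x, y) \<in> E"
    show "X = {}"
    proof (rule ccontr)
      assume "X \<noteq> {}" then obtain v where v: "v \<in> X" by blast
      obtain \<tau> where tau: "det_strat VMax E \<tau>" "\<forall>h. h \<noteq> [] \<longrightarrow> last h \<in> X \<longrightarrow> last h \<notin> VMin \<longrightarrow> \<tau> h \<in> X"
        using trap_strategy[OF X(1) X(3)] by blast
      have tauG: "det_strat VMax ?G \<tau>"
        using tau(1) unfolding det_strat_def using Gt_max VMax_iff by blast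
      have "\<forall>h. h \<noteq> [] \<longrightarrow> last h \<in> X \<longrightarrow> last h \<in> VMin \<longrightarrow> \<sigma>G h \<in> X"
        using X(2) sG unfolding det_strat_def by blast
      then have "\<forall>n. play_vertex VMin \<sigma>G \<tau> v n \<in> X" using play_stays tau(2) v by blast
      then show False using reachG tauG X(1) by blast
    qed
  qed
  then obtain rk s where rk0: "\<forall>x. rk x = 0 \<longleftrightarrow> x \<in> T" and "\<forall>x. rk x < CARD('v)"
    and smin: "\<forall>u\<in>VMin. s u \<in> ?G `` {u} \<and> rk (s u) < rk u"
    and rkmax: "\<forall>x. x \<notin> VMin \<longrightarrow> x \<notin> T \<longrightarrow> (\<forall>y. (x, y) \<in> E \<longrightarrow> rk y < rk x)"
    by blast
  define \<sigma> where "\<sigma> h = s (last h)" for h :: "'v list"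
  have sig: "det_strat VMin E \<sigma>" unfolding det_strat_def \<sigma>_def using smin Gt_sub by blast
  have ml: "memoryless_det \<sigma>" unfolding memoryless_det_def \<sigma>_def by blast
  define \<phi> where "\<phi> v = real_of_ereal (?V v)" for v
  have phi: "ereal (\<phi> v) = ?V v" for v unfolding \<phi>_def using finV[rule_format, of v] by (cases "?V v") auto
  have phiT: "\<phi> t = 0" if "t \<in> T" for t
    using feq f_T[OF that, of "CARD('v) - 1"] phi[of t] by simp
  have step: "real_of_int (w x y) + \<phi> y \<le> \<phi> x"
    if "x \<notin> T" "(x, y) \<in> E" "x \<in> VMin \<longrightarrow> y = s x" for x y
  proof (cases "x \<in> VMin")
    case True
    then have y: "y = s x" using that by simp
    have "(x, y) \<in> ?G" using smin True y by auto
    then have "ereal (of_int (w x y)) + ?f (CARD('v) - 1 - 1) y = ?f (CARD('v) - 1) x"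
      unfolding Gtilde_edges_def Etilde_def using True by simp
    moreover have "?f (CARD('v) - 1) y \<le> ?f (CARD('v) - 1 - 1) y" by (rule f_anti) simp
    ultimately have "ereal (of_int (w x y)) + ?f (CARD('v) - 1) y \<le> ?f (CARD('v) - 1) x"
      by (metis add_left_mono)
    then have "ereal (of_int (w x y)) + ereal (\<phi> y) \<le> ereal (\<phi> x)" using feq phi by simp
    then show ?thesis by simp
  next
    case False
    have n: "CARD('v) = Suc (CARD('v) - 1)" using card_pos by simp
    have "ereal (of_int (w x y)) + ?f (CARD('v) - 1) y \<le> ?f CARD('v) x"
      using F_max_ge[OF False that(1,2)] n f_Suc by metis
    then have "ereal (of_int (w x y)) + ereal (\<phi> y) \<le> ereal (\<phi> x)" using feq phi by simp
    then show ?thesis by simp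
  qed
  have "Val_sigma VMax VMin T E w \<sigma> v = ?V v" for v
  proof (rule antisym)
    show "Val_sigma VMax VMin T E w \<sigma> v \<le> ?V v"
      unfolding Val_sigma_def
    proof (intro SUP_least, simp)
      fix \<tau> assume tau: "det_strat VMax E \<tau>"
      let ?p = "play_vertex VMin \<sigma> \<tau> v"
      have ps: "?p j \<in> VMin \<Longrightarrow> ?p (Suc j) = s (?p j)" for j
        by (simp add: play_vertex_Suc \<sigma>_def last_play_hist)
      have "\<forall>j. ?p j \<notin> T \<longrightarrow> rk (?p (Suc j)) < rk (?p j)"
      proof (intro allI impI)
        fix j assume pj: "?p j \<notin> T"
        show "rk (?p (Suc j)) < rk (?p j)"
        proof (cases "?p j \<in> VMin")
          case True then show ?thesis using ps smin by simp
        next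
          case False then show ?thesis using rkmax pj play_edge[OF sig tau pj] by blast
        qed
      qed
      from hit_by_rank[OF rk0 this] obtain N where N: "?p N \<in> T" "\<forall>j<N. ?p j \<notin> T" by auto
      have "\<forall>j<N. real_of_int (w (?p j) (?p (Suc j))) + \<phi> (?p (Suc j)) \<le> \<phi> (?p j)"
      proof (intro allI impI)
        fix j assume "j < N"
        then have pj: "?p j \<notin> T" using N by simp
        show "real_of_int (w (?p j) (?p (Suc j))) + \<phi> (?p (Suc j)) \<le> \<phi> (?p j)"
          using step[OF pj play_edge[OF sig tau pj]] ps by blast
      qed
      from tele_upper[where p="?p", OF this] have "real_of_int (\<Sum>j<N. w (?p j) (?p (Suc j))) \<le> \<phi> v"
        using phiT[OF N(1)] by simp
      then show "TP_det VMin T w \<sigma> \<tau> v \<le> ?V v" using TP_hit[OF N] phi[of v] by (metis ereal_less_eq(3))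
    qed
  next
    show "?V v \<le> Val_sigma VMax VMin T E w \<sigma> v" by (rule Val_d_le_sigma[OF sig])
  qed
  then show ?thesis using sig ml by blast
qed

end



definition pp :: "('v \<Rightarrow> 'v pmf) \<Rightarrow> 'v list \<Rightarrow> real" where
  "pp P \<pi> = (\<Prod>i < length \<pi> - 1. pmf (P (\<pi> ! i)) (\<pi> ! Suc i))"

lemma pp_nonneg: "pp P \<pi> \<ge> 0"
  unfolding pp_def by (intro prod_nonneg) auto

lemma pp_single[simp]: "pp P [x] = 1"
  unfolding pp_def by simp

lemma pp_Cons: "\<pi> \<noteq> [] \<Longrightarrow> pp P (x # \<pi>) = pmf (P x) (hd \<pi>) * pp P \<pi>"
proof -
  assume ne: "\<pi> \<noteq> []"
  then obtain k where k: "length \<pi> = Suc k" by (cases \<pi>) auto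
  have "pp P (x # \<pi>) = (\<Prod>i < Suc k. pmf (P ((x # \<pi>) ! i)) ((x # \<pi>) ! Suc i))"
    unfolding pp_def using k by simp
  also have "\<dots> = pmf (P x) (\<pi> ! 0) * (\<Prod>i < k. pmf (P (\<pi> ! i)) (\<pi> ! Suc i))"
    by (subst prod.lessThan_Suc_shift) simp
  also have "\<dots> = pmf (P x) (hd \<pi>) * pp P \<pi>"
    unfolding pp_def using k ne by (simp add: hd_conv_nth)
  finally show ?thesis .
qed

lemma path_weight_Cons: "\<pi> \<noteq> [] \<Longrightarrow> path_weight w (x # \<pi>) = w x (hd \<pi>) + path_weight w \<pi>"
proof -
  assume ne: "\<pi> \<noteq> []"
  then obtain k where k: "length \<pi> = Suc k" by (cases \<pi>) auto
  have "path_weight w (x # \<pi>) = (\<Sum>i < Suc k. w ((x # \<pi>) ! i) ((x # \<pi>) ! Suc i))"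
    unfolding path_weight_def using k by simp
  also have "\<dots> = w x (\<pi> ! 0) + (\<Sum>i < k. w (\<pi> ! i) (\<pi> ! Suc i))"
    by (subst sum.lessThan_Suc_shift) simp
  also have "\<dots> = w x (hd \<pi>) + path_weight w \<pi>"
    unfolding path_weight_def using k ne by (simp add: hd_conv_nth)
  finally show ?thesis .
qed

lemma path_prob_pp: "path_prob VMin \<rho> \<tau> = pp (\<lambda>x. if x \<in> VMin then \<rho> x else \<tau> x)"
  unfolding path_prob_def pp_def by (intro ext) simp

lemma fplays_hd: "\<pi> \<in> fplays T E x \<Longrightarrow> \<pi> \<noteq> [] \<and> hd \<pi> = x"
  unfolding fplays_def by simp

lemma fplays_T: "x \<in> T \<Longrightarrow> fplays T E x = {[x]}"
proof (intro equalityI subsetI)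
  fix \<pi> assume x: "x \<in> T" and p: "\<pi> \<in> fplays T E x"
  then have ne: "\<pi> \<noteq> []" "hd \<pi> = x" and ok: "\<forall>i<length \<pi> - 1. \<pi> ! i \<notin> T"
    unfolding fplays_def by auto
  show "\<pi> \<in> {[x]}"
  proof (cases "length \<pi> - 1")
    case 0 then show ?thesis using ne by (cases \<pi>) auto
  next
    case (Suc k)
    then have "\<pi> ! 0 \<notin> T" using ok by auto
    then show ?thesis using ne x by (simp add: hd_conv_nth)
  qed
next
  fix \<pi> assume "x \<in> T" "\<pi> \<in> {[x]}"
  then show "\<pi> \<in> fplays T E x" unfolding fplays_def by simp
qed

context spg begin

lemma fplays_nT:
  assumes x: "x \<notin> T"
  shows "fplays T E x = (\<Union>y\<in>E `` {x}. (#) x ` fplays T E y)"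
proof (intro equalityI subsetI)
  fix \<pi> assume p: "\<pi> \<in> fplays T E x"
  then have ne: "\<pi> \<noteq> []" and hd: "hd \<pi> = x" and lst: "last \<pi> \<in> T"
    and ok: "\<forall>i<length \<pi> - 1. \<pi> ! i \<notin> T \<and> (\<pi> ! i, \<pi> ! Suc i) \<in> E"
    unfolding fplays_def by auto
  obtain \<pi>' where pe: "\<pi> = x # \<pi>'" using ne hd by (cases \<pi>) auto
  have ne': "\<pi>' \<noteq> []"
  proof
    assume "\<pi>' = []" then show False using lst x pe by simp
  qed
  define y where "y = hd \<pi>'"
  have y0: "\<pi>' ! 0 = y" unfolding y_def using ne' by (simp add: hd_conv_nth)
  have e: "(x, y) \<in> E" using ok[rule_format, of 0] pe ne' y0 by simp
  have "\<pi>' \<in> fplays T E y"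
    unfolding fplays_def
  proof (intro CollectI conjI allI impI)
    show "\<pi>' \<noteq> []" "hd \<pi>' = y" using ne' y_def by auto
    show "last \<pi>' \<in> T" using lst pe ne' by simp
    fix i assume i: "i < length \<pi>' - 1"
    then have "Suc i < length \<pi> - 1" using pe by simp
    then show "\<pi>' ! i \<notin> T" "(\<pi>' ! i, \<pi>' ! Suc i) \<in> E" using ok pe by auto
  qed
  then show "\<pi> \<in> (\<Union>y\<in>E `` {x}. (#) x ` fplays T E y)" using e pe by blast
next
  fix \<pi> assume "\<pi> \<in> (\<Union>y\<in>E `` {x}. (#) x ` fplays T E y)"
  then obtain y \<pi>' where e: "(x, y) \<in> E" and p': "\<pi>' \<in> fplays T E y" and pe: "\<pi> = x # \<pi>'" by blast
  from p' have ne': "\<pi>' \<noteq> []" and hd': "hd \<pi>' = y" and lst': "last \<pi>' \<in> T"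
    and ok': "\<forall>i<length \<pi>' - 1. \<pi>' ! i \<notin> T \<and> (\<pi>' ! i, \<pi>' ! Suc i) \<in> E"
    unfolding fplays_def by auto
  have ok: "\<forall>i<length \<pi> - 1. \<pi> ! i \<notin> T \<and> (\<pi> ! i, \<pi> ! Suc i) \<in> E"
  proof (intro allI impI)
    fix i assume i: "i < length \<pi> - 1"
    show "\<pi> ! i \<notin> T \<and> (\<pi> ! i, \<pi> ! Suc i) \<in> E"
    proof (cases i)
      case 0
      then show ?thesis using pe x e hd' ne' by (simp add: hd_conv_nth)
    next
      case (Suc j)
      then have "j < length \<pi>' - 1" using i pe by simp
      then show ?thesis using ok' pe Suc by simp
    qed
  qed
  show "\<pi> \<in> fplays T E x"
    unfolding fplays_def using ok pe ne' lst' by simp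
qed

lemma nn_decomp:
  assumes x: "x \<notin> T"
  shows "(\<integral>\<^sup>+\<pi>. G \<pi> \<partial>count_space (fplays T E x)) = (\<Sum>y\<in>E `` {x}. \<integral>\<^sup>+\<pi>. G (x # \<pi>) \<partial>count_space (fplays T E y))"
proof -
  let ?A = "\<lambda>y. (#) x ` fplays T E y"
  have disj: "disjoint_family_on ?A (E `` {x})"
    unfolding disjoint_family_on_def
  proof (intro ballI impI)
    fix m n assume mn: "m \<in> E `` {x}" "n \<in> E `` {x}" "m \<noteq> n"
    show "?A m \<inter> ?A n = {}"
    proof (rule ccontr)
      assume "?A m \<inter> ?A n \<noteq> {}"
      then obtain p1 p2 where p: "p1 \<in> fplays T E m" "p2 \<in> fplays T E n" "x # p1 = x # p2" by blast
      then show False using fplays_hd[OF p(1)] fplays_hd[OF p(2)] mn(3) by simp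
    qed
  qed
  have "(\<integral>\<^sup>+\<pi>. G \<pi> \<partial>count_space (fplays T E x)) = (\<integral>\<^sup>+\<pi>. G \<pi> * indicator (fplays T E x) \<pi> \<partial>count_space UNIV)"
    by (rule nn_integral_count_space_indicator) simp
  also have "\<dots> = (\<integral>\<^sup>+\<pi>. (\<Sum>y\<in>E `` {x}. G \<pi> * indicator (?A y) \<pi>) \<partial>count_space UNIV)"
    unfolding fplays_nT[OF x] by (subst indicator_UN_disjoint[OF _ disj]) (simp_all add: sum_distrib_left)
  also have "\<dots> = (\<Sum>y\<in>E `` {x}. \<integral>\<^sup>+\<pi>. G \<pi> * indicator (?A y) \<pi> \<partial>count_space UNIV)"
    by (rule nn_integral_sum) simp
  also have "\<dots> = (\<Sum>y\<in>E `` {x}. \<integral>\<^sup>+\<pi>. G \<pi> \<partial>count_space (?A y))"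
    by (intro sum.cong refl, subst nn_integral_count_space_indicator) simp_all
  also have "\<dots> = (\<Sum>y\<in>E `` {x}. \<integral>\<^sup>+\<pi>. G (x # \<pi>) \<partial>count_space (fplays T E y))"
    by (intro sum.cong refl nn_integral_bij_count_space[symmetric]) (simp add: bij_betw_def inj_on_def)
  finally show ?thesis .
qed

definition NI :: "('v \<Rightarrow> 'v pmf) \<Rightarrow> ('v list \<Rightarrow> ennreal) \<Rightarrow> 'v \<Rightarrow> ennreal" where
  "NI P g x = (\<integral>\<^sup>+\<pi>. ennreal (pp P \<pi>) * g \<pi> \<partial>count_space (fplays T E x))"

lemma NI_T: "x \<in> T \<Longrightarrow> NI P g x = g [x]"
  unfolding NI_def by (simp add: fplays_T nn_integral_count_space_finite)

lemma NI_step: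
  assumes x: "x \<notin> T"
  shows "NI P g x = (\<Sum>y\<in>E `` {x}. ennreal (pmf (P x) y) *
            (\<integral>\<^sup>+\<pi>. ennreal (pp P \<pi>) * g (x # \<pi>) \<partial>count_space (fplays T E y)))"
proof -
  have "NI P g x = (\<Sum>y\<in>E `` {x}. \<integral>\<^sup>+\<pi>. ennreal (pp P (x # \<pi>)) * g (x # \<pi>) \<partial>count_space (fplays T E y))"
    unfolding NI_def by (rule nn_decomp[OF x])
  also have "\<dots> = (\<Sum>y\<in>E `` {x}. \<integral>\<^sup>+\<pi>. ennreal (pmf (P x) y) * (ennreal (pp P \<pi>) * g (x # \<pi>)) \<partial>count_space (fplays T E y))"
  proof (intro sum.cong refl nn_integral_cong)
    fix y \<pi> assume "\<pi> \<in> space (count_space (fplays T E y))"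
    then have "\<pi> \<noteq> []" "hd \<pi> = y" using fplays_hd[of \<pi> T E y] by auto
    then show "ennreal (pp P (x # \<pi>)) * g (x # \<pi>) = ennreal (pmf (P x) y) * (ennreal (pp P \<pi>) * g (x # \<pi>))"
      by (simp add: pp_Cons ennreal_mult pp_nonneg mult.assoc)
  qed
  also have "\<dots> = (\<Sum>y\<in>E `` {x}. ennreal (pmf (P x) y) * (\<integral>\<^sup>+\<pi>. ennreal (pp P \<pi>) * g (x # \<pi>) \<partial>count_space (fplays T E y)))"
    by (intro sum.cong refl nn_integral_cmult) simp
  finally show ?thesis .
qed

definition validP :: "('v \<Rightarrow> 'v pmf) \<Rightarrow> bool" where
  "validP P \<longleftrightarrow> (\<forall>x. x \<notin> T \<longrightarrow> set_pmf (P x) \<subseteq> E `` {x})"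

lemma sumP: "validP P \<Longrightarrow> x \<notin> T \<Longrightarrow> (\<Sum>y\<in>E `` {x}. pmf (P x) y) = 1"
  unfolding validP_def by (intro sum_pmf_eq_1) auto

lemma sumP_enn: "validP P \<Longrightarrow> x \<notin> T \<Longrightarrow> (\<Sum>y\<in>E `` {x}. ennreal (pmf (P x) y)) = 1"
  using sumP by (simp add: sum_ennreal[symmetric])

lemma NI_mono: "(\<And>\<pi>. g \<pi> \<le> h \<pi>) \<Longrightarrow> NI P g x \<le> NI P h x"
  unfolding NI_def by (intro nn_integral_mono mult_left_mono) auto

lemma NI_SUP:
  assumes "incseq g"
  shows "NI P (\<lambda>\<pi>. SUP m. g m \<pi>) x = (SUP m. NI P (g m) x)"
proof -
  have "NI P (\<lambda>\<pi>. SUP m. g m \<pi>) x = (\<integral>\<^sup>+\<pi>. (SUP m. ennreal (pp P \<pi>) * g m \<pi>) \<partial>count_space (fplays T E x))"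
    unfolding NI_def by (simp add: SUP_mult_left_ennreal)
  also have "\<dots> = (SUP m. \<integral>\<^sup>+\<pi>. ennreal (pp P \<pi>) * g m \<pi> \<partial>count_space (fplays T E x))"
    using assms by (intro nn_integral_monotone_convergence_SUP) (auto simp: incseq_def le_fun_def intro!: mult_left_mono)
  finally show ?thesis unfolding NI_def .
qed

definition reachP :: "('v \<Rightarrow> 'v pmf) \<Rightarrow> 'v \<Rightarrow> ennreal" where
  "reachP P x = NI P (\<lambda>_. 1) x"

lemma reach_prob_eq: "reach_prob VMin T E \<rho> \<tau> v = reachP (\<lambda>x. if x \<in> VMin then \<rho> x else \<tau> x) v"
  unfolding reach_prob_def reachP_def NI_def path_prob_pp by simp

lemma reach_le1:
  assumes P: "validP P"
  shows "reachP P x \<le> 1"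
proof -
  define g where "g m \<pi> = (if length \<pi> - 1 \<le> m then 1 else 0 :: ennreal)" for m and \<pi> :: "'v list"
  have inc: "incseq g" unfolding incseq_def le_fun_def g_def by auto
  have sup: "(SUP m. g m \<pi>) = 1" for \<pi>
  proof (rule antisym)
    show "(SUP m. g m \<pi>) \<le> 1" unfolding g_def by (intro SUP_least) auto
    show "1 \<le> (SUP m. g m \<pi>)" using SUP_upper[of "length \<pi> - 1" UNIV "\<lambda>m. g m \<pi>"] unfolding g_def by simp
  qed
  have bnd: "NI P (g m) x \<le> 1" for m x
  proof (induction m arbitrary: x)
    case 0
    show ?case
    proof (cases "x \<in> T")
      case True then show ?thesis by (simp add: NI_T g_def)
    next
      case False
      have "NI P (g 0) x = (\<Sum>y\<in>E `` {x}. ennreal (pmf (P x) y) * (\<integral>\<^sup>+\<pi>. ennreal (pp P \<pi>) * g 0 (x # \<pi>) \<partial>count_space (fplays T E y)))"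
        by (rule NI_step[OF False])
      also have "\<dots> = 0"
      proof (intro sum.neutral ballI)
        fix y assume "y \<in> E `` {x}"
        have "(\<integral>\<^sup>+\<pi>. ennreal (pp P \<pi>) * g 0 (x # \<pi>) \<partial>count_space (fplays T E y)) = 0"
          by (intro nn_integral_zero' AE_I2) (auto simp: g_def dest!: fplays_hd)
        then show "ennreal (pmf (P x) y) * (\<integral>\<^sup>+\<pi>. ennreal (pp P \<pi>) * g 0 (x # \<pi>) \<partial>count_space (fplays T E y)) = 0" by simp
      qed
      finally show ?thesis by simp
    qed
  next
    case (Suc m)
    show ?case
    proof (cases "x \<in> T")
      case True then show ?thesis by (simp add: NI_T g_def)
    next
      case False
      have "NI P (g (Suc m)) x = (\<Sum>y\<in>E `` {x}. ennreal (pmf (P x) y) * (\<integral>\<^sup>+\<pi>. ennreal (pp P \<pi>) * g (Suc m) (x # \<pi>) \<partial>count_space (fplays T E y)))"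
        by (rule NI_step[OF False])
      also have "\<dots> = (\<Sum>y\<in>E `` {x}. ennreal (pmf (P x) y) * NI P (g m) y)"
      proof (intro sum.cong refl arg_cong2[where f="(*)"])
        fix y show "(\<integral>\<^sup>+\<pi>. ennreal (pp P \<pi>) * g (Suc m) (x # \<pi>) \<partial>count_space (fplays T E y)) = NI P (g m) y"
          unfolding NI_def by (intro nn_integral_cong) (auto simp: g_def dest!: fplays_hd)
      qed
      also have "\<dots> \<le> (\<Sum>y\<in>E `` {x}. ennreal (pmf (P x) y) * 1)"
        by (intro sum_mono mult_left_mono Suc.IH) simp
      also have "\<dots> = 1" using sumP_enn[OF P False] by simp
      finally show ?thesis .
    qed
  qed
  have "reachP P x = NI P (\<lambda>\<pi>. SUP m. g m \<pi>) x" unfolding reachP_def sup by simp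
  also have "\<dots> = (SUP m. NI P (g m) x)" by (rule NI_SUP[OF inc])
  also have "\<dots> \<le> 1" by (intro SUP_least bnd)
  finally show ?thesis .
qed

lemma reach_T: "x \<in> T \<Longrightarrow> reachP P x = 1"
  unfolding reachP_def by (simp add: NI_T)

lemma reach_step: "x \<notin> T \<Longrightarrow> reachP P x = (\<Sum>y\<in>E `` {x}. ennreal (pmf (P x) y) * reachP P y)"
  unfolding reachP_def by (subst NI_step) (simp_all add: NI_def)

definition posT :: "('v \<Rightarrow> 'v pmf) \<Rightarrow> bool" where
  "posT P \<longleftrightarrow> (\<forall>x. \<exists>\<pi>\<in>fplays T E x. pp P \<pi> > 0)"

definition prank :: "('v \<Rightarrow> 'v pmf) \<Rightarrow> 'v \<Rightarrow> nat" where
  "prank P x = (LEAST k. \<exists>\<pi>\<in>fplays T E x. pp P \<pi> > 0 \<and> length \<pi> = Suc k)"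

lemma prank_step:
  assumes pos: "posT P" and x: "x \<notin> T"
  shows "\<exists>y. (x, y) \<in> E \<and> pmf (P x) y > 0 \<and> prank P y < prank P x"
proof -
  obtain \<pi>0 where p0: "\<pi>0 \<in> fplays T E x" "pp P \<pi>0 > 0" using pos unfolding posT_def by blast
  then have "length \<pi>0 = Suc (length \<pi>0 - 1)" using fplays_hd[OF p0(1)] by (cases \<pi>0) auto
  then have ex: "\<exists>k. \<exists>\<pi>\<in>fplays T E x. pp P \<pi> > 0 \<and> length \<pi> = Suc k" using p0 by blast
  have "\<exists>\<pi>\<in>fplays T E x. pp P \<pi> > 0 \<and> length \<pi> = Suc (prank P x)"
    unfolding prank_def by (rule LeastI_ex) (rule ex)
  then obtain \<pi> where p: "\<pi> \<in> fplays T E x" "pp P \<pi> > 0" "length \<pi> = Suc (prank P x)"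
    by blast
  have "\<pi> \<in> (\<Union>y\<in>E `` {x}. (#) x ` fplays T E y)" using p(1) fplays_nT[OF x] by simp
  then obtain y \<pi>' where e: "(x, y) \<in> E" and p': "\<pi>' \<in> fplays T E y" and pe: "\<pi> = x # \<pi>'" by blast
  have ne': "\<pi>' \<noteq> []" "hd \<pi>' = y" using fplays_hd[OF p'] by auto
  have "pp P \<pi> = pmf (P x) y * pp P \<pi>'" using pe ne' pp_Cons[OF ne'(1)] by simp
  then have pos2: "pmf (P x) y > 0" "pp P \<pi>' > 0" using p(2) pp_nonneg[of P \<pi>'] pmf_nonneg[of "P x" y]
    by (auto simp: zero_less_mult_iff)
  obtain k where k: "length \<pi>' = Suc k" using ne' by (cases \<pi>') auto
  then have "prank P y \<le> k" unfolding prank_def using p' pos2 by (intro Least_le) blast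
  moreover have "Suc k = prank P x" using k pe p(3) by simp
  ultimately show ?thesis using e pos2 by (intro exI[of _ y]) auto
qed

lemma min_principle:
  fixes d :: "'v \<Rightarrow> real"
  assumes P: "validP P" and pos: "posT P"
    and sup: "\<And>x. x \<notin> T \<Longrightarrow> d x \<ge> (\<Sum>y\<in>E `` {x}. pmf (P x) y * d y)"
    and bT: "\<And>x. x \<in> T \<Longrightarrow> d x \<ge> 0"
  shows "d x \<ge> 0"
proof (rule ccontr)
  assume neg: "\<not> d x \<ge> 0"
  define m where "m = Min (range d)"
  have mle: "m \<le> d y" for y unfolding m_def by simp
  have min_in: "m \<in> range d" unfolding m_def by (intro Min_in) auto
  have mneg: "m < 0" using mle[of x] neg by simp
  define S where "S = {y. d y = m}"
  have "S \<noteq> {}" using min_in unfolding S_def by auto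
  then obtain z where z: "z \<in> S" "\<And>z'. z' \<in> S \<Longrightarrow> prank P z \<le> prank P z'"
    using ex_has_least_nat[of "\<lambda>z. z \<in> S" _ "prank P"] by blast
  have zT: "z \<notin> T" using z(1) bT mneg unfolding S_def by force
  obtain y0 where y0: "(z, y0) \<in> E" "pmf (P z) y0 > 0" "prank P y0 < prank P z"
    using prank_step[OF pos zT] by blast
  have "(\<Sum>y\<in>E `` {z}. pmf (P z) y * (d y - m)) = (\<Sum>y\<in>E `` {z}. pmf (P z) y * d y) - (\<Sum>y\<in>E `` {z}. pmf (P z) y) * m"
    by (simp add: right_diff_distrib sum_subtractf sum_distrib_right)
  also have "\<dots> = (\<Sum>y\<in>E `` {z}. pmf (P z) y * d y) - m" using sumP[OF P zT] by simp
  also have "\<dots> \<le> d z - m" using sup[OF zT] by simp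
  also have "\<dots> = 0" using z(1) unfolding S_def by simp
  finally have s0: "(\<Sum>y\<in>E `` {z}. pmf (P z) y * (d y - m)) \<le> 0" .
  have "pmf (P z) y0 * (d y0 - m) \<le> (\<Sum>y\<in>E `` {z}. pmf (P z) y * (d y - m))"
    using y0(1) by (intro member_le_sum) (auto simp: mle)
  then have "pmf (P z) y0 * (d y0 - m) \<le> 0" using s0 by simp
  then have "d y0 \<le> m" using y0(2) by (simp add: mult_le_0_iff)
  then have "y0 \<in> S" using mle[of y0] unfolding S_def by simp
  then show False using z(2) y0(3) by fastforce
qed

lemma reach_one:
  assumes P: "validP P" and pos: "posT P"
  shows "reachP P x = 1"
proof -
  define r where "r y = enn2real (reachP P y)" for y
  have fin: "reachP P y = ennreal (r y)" for y
  proof -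
    have "reachP P y < top" using reach_le1[OF P, of y] ennreal_one_less_top by (rule order.strict_trans1)
    then show ?thesis unfolding r_def by simp
  qed
  have rnn: "r z \<ge> 0" for z unfolding r_def by simp
  have step: "r y = (\<Sum>z\<in>E `` {y}. pmf (P y) z * r z)" if "y \<notin> T" for y
  proof -
    have "ennreal (r y) = (\<Sum>z\<in>E `` {y}. ennreal (pmf (P y) z) * reachP P z)"
      using reach_step[OF that, of P] fin[of y] by simp
    also have "\<dots> = (\<Sum>z\<in>E `` {y}. ennreal (pmf (P y) z * r z))"
      by (intro sum.cong refl) (simp add: fin ennreal_mult rnn)
    also have "\<dots> = ennreal (\<Sum>z\<in>E `` {y}. pmf (P y) z * r z)"
      by (rule sum_ennreal) (simp add: r_def)
    finally show ?thesis using rnn by (simp add: sum_nonneg)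
  qed
  have "r x - 1 \<ge> 0"
  proof (rule min_principle[OF P pos, of "\<lambda>y. r y - 1"])
    fix y assume y: "y \<notin> T"
    have "(\<Sum>z\<in>E `` {y}. pmf (P y) z * (r z - 1)) = (\<Sum>z\<in>E `` {y}. pmf (P y) z * r z) - (\<Sum>z\<in>E `` {y}. pmf (P y) z)"
      by (simp add: right_diff_distrib sum_subtractf)
    also have "\<dots> = (\<Sum>z\<in>E `` {y}. pmf (P y) z * r z) - 1" using sumP[OF P y] by simp
    finally have "(\<Sum>z\<in>E `` {y}. pmf (P y) z * (r z - 1)) = (\<Sum>z\<in>E `` {y}. pmf (P y) z * r z) - 1" .
    then show "(\<Sum>z\<in>E `` {y}. pmf (P y) z * (r z - 1)) \<le> r y - 1" using step[OF y] by simp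
  next
    fix y assume "y \<in> T" then show "0 \<le> r y - 1" by (simp add: r_def reach_T)
  qed
  moreover have "r x \<le> 1" unfolding r_def using reach_le1[OF P, of x] by (simp add: enn2real_leI)
  ultimately show ?thesis using fin[of x] by simp
qed

end



context spg begin

definition ell :: "'v list \<Rightarrow> real" where "ell \<pi> = real (length \<pi> - 1)"

lemma ell_Cons: "\<pi> \<noteq> [] \<Longrightarrow> ell (x # \<pi>) = 1 + ell \<pi>"
  unfolding ell_def by (cases \<pi>) auto

lemma ell_nonneg: "ell \<pi> \<ge> 0" unfolding ell_def by simp

lemma ell_single[simp]: "ell [x] = 0" unfolding ell_def by simp

definition Lf :: "('v \<Rightarrow> 'v pmf) \<Rightarrow> 'v \<Rightarrow> ennreal" where
  "Lf P x = NI P (\<lambda>\<pi>. ennreal (ell \<pi>)) x"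

lemma NI_plus_const:
  assumes x: "y \<in> UNIV"
  shows "(\<integral>\<^sup>+\<pi>. ennreal (pp P \<pi>) * (c + g \<pi>) \<partial>count_space (fplays T E y)) = c * reachP P y + NI P g y"
proof -
  have "(\<integral>\<^sup>+\<pi>. ennreal (pp P \<pi>) * (c + g \<pi>) \<partial>count_space (fplays T E y))
     = (\<integral>\<^sup>+\<pi>. c * ennreal (pp P \<pi>) + ennreal (pp P \<pi>) * g \<pi> \<partial>count_space (fplays T E y))"
    by (intro nn_integral_cong) (simp add: distrib_left mult.commute)
  also have "\<dots> = (\<integral>\<^sup>+\<pi>. c * ennreal (pp P \<pi>) \<partial>count_space (fplays T E y)) + NI P g y"
    unfolding NI_def by (rule nn_integral_add) auto
  also have "\<dots> = c * reachP P y + NI P g y"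
    unfolding reachP_def NI_def by (subst nn_integral_cmult) auto
  finally show ?thesis .
qed

lemma Lf_finite:
  assumes P: "validP P" and pos: "posT P"
  shows "Lf P x < top"
proof -
  let ?r = "prank P"
  define D where "D = {pmf (P a) b | a b. pmf (P a) b > 0}"
  have Dfin: "finite D"
  proof -
    have "D \<subseteq> (\<lambda>(a, b). pmf (P a) b) ` UNIV" unfolding D_def by auto
    then show ?thesis by (rule finite_subset) simp
  qed
  obtain a0 where "a0 \<in> set_pmf (P x)" using set_pmf_not_empty[of "P x"] by (meson ex_in_conv)
  then have "pmf (P x) a0 > 0" by (simp add: pmf_positive)
  then have "pmf (P x) a0 \<in> D" unfolding D_def by blast
  then have Dne: "D \<noteq> {}" by auto
  define \<delta> where "\<delta> = Min D"
  have \<delta>pos: "\<delta> > 0" unfolding \<delta>_def using Dfin Dne by (subst Min_gr_iff) (auto simp: D_def)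
  have \<delta>le: "\<delta> \<le> pmf (P a) b" if "pmf (P a) b > 0" for a b
    unfolding \<delta>_def using Dfin that by (intro Min_le) (auto simp: D_def)
  have \<delta>1: "\<delta> \<le> 1" using \<delta>le[of x a0] \<open>pmf (P x) a0 \<in> D\<close> pmf_le_1[of "P x" a0] unfolding D_def by auto
  define R where "R = Max (range ?r)"
  have rR: "?r y \<le> R" for y unfolding R_def by simp
  define G :: real where "G = (real R + 1) / \<delta> ^ R"
  have GR: "\<delta> ^ R * G = real R + 1" unfolding G_def using \<delta>pos by simp
  define b :: "nat \<Rightarrow> real" where "b = rec_nat G (\<lambda>_ bk. \<delta> * bk - 1)"
  have b0: "b 0 = G" and bS: "b (Suc k) = \<delta> * b k - 1" for k unfolding b_def by simp_all
  have blow: "b k \<ge> \<delta> ^ k * G - real k" for k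
  proof (induction k)
    case 0 then show ?case by (simp add: b0)
  next
    case (Suc k)
    have "\<delta> * real k \<le> real k" using \<delta>1 \<delta>pos by (intro mult_left_le_one_le) auto
    then have "\<delta> * (\<delta> ^ k * G - real k) - 1 \<ge> \<delta> ^ Suc k * G - real (Suc k)" by (simp add: algebra_simps)
    moreover have "\<delta> * b k \<ge> \<delta> * (\<delta> ^ k * G - real k)" using Suc \<delta>pos by simp
    ultimately show ?case by (simp add: bS)
  qed
  have bpos: "b k \<ge> 1" if "k \<le> R" for k
  proof -
    have "\<delta> ^ R \<le> \<delta> ^ k" using that \<delta>pos \<delta>1 by (intro power_decreasing) auto
    moreover have "G \<ge> 0" unfolding G_def using \<delta>pos by simp
    ultimately have "\<delta> ^ k * G \<ge> \<delta> ^ R * G" by (intro mult_right_mono) auto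
    then show ?thesis using blow[of k] GR that by simp
  qed
  have bstep: "b (Suc k) \<le> b k" if "k \<le> R" for k
  proof -
    have "\<delta> * b k \<le> b k" using bpos[OF that] \<delta>1 \<delta>pos by (intro mult_left_le_one_le) auto
    then show ?thesis by (simp add: bS)
  qed
  have bdec': "j \<le> k \<longrightarrow> k \<le> R \<longrightarrow> b k \<le> b j" for j k
  proof (induction k)
    case 0 then show ?case by simp
  next
    case (Suc k)
    show ?case
    proof (intro impI)
      assume jk: "j \<le> Suc k" and kR: "Suc k \<le> R"
      show "b (Suc k) \<le> b j"
      proof (cases "j = Suc k")
        case True then show ?thesis by simp
      next
        case False
        then have "b k \<le> b j" using Suc jk kR by simp
        then show ?thesis using bstep[of k] kR by simp
      qed
    qed
  qed
  have bdec: "b k \<le> b j" if "j \<le> k" "k \<le> R" for j k using bdec' that by blast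
  define \<psi> where "\<psi> y = G - b (?r y)" for y
  have \<psi>nn: "\<psi> y \<ge> 0" for y unfolding \<psi>_def using bdec[of 0 "?r y"] rR[of y] b0 by simp
  have super: "1 + (\<Sum>y\<in>E `` {z}. pmf (P z) y * \<psi> y) \<le> \<psi> z" if z: "z \<notin> T" for z
  proof -
    obtain y0 where y0: "(z, y0) \<in> E" "pmf (P z) y0 > 0" "?r y0 < ?r z" using prank_step[OF pos z] by blast
    then obtain k where k: "?r z = Suc k" by (cases "?r z") auto
    have kR: "Suc k \<le> R" using rR[of z] k by simp
    have "(\<Sum>y\<in>E `` {z}. pmf (P z) y * \<psi> y) = (\<Sum>y\<in>E `` {z}. pmf (P z) y) * G - (\<Sum>y\<in>E `` {z}. pmf (P z) y * b (?r y))"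
      unfolding \<psi>_def by (simp add: right_diff_distrib sum_subtractf sum_distrib_right)
    also have "\<dots> = G - (\<Sum>y\<in>E `` {z}. pmf (P z) y * b (?r y))" using sumP[OF P z] by simp
    also have "\<dots> \<le> G - pmf (P z) y0 * b (?r y0)"
    proof -
      have "pmf (P z) y0 * b (?r y0) \<le> (\<Sum>y\<in>E `` {z}. pmf (P z) y * b (?r y))"
        using y0(1) by (intro member_le_sum) (auto intro!: mult_nonneg_nonneg order_trans[OF _ bpos[OF rR]])
      then show ?thesis by simp
    qed
    also have "\<dots> \<le> G - \<delta> * b k"
    proof -
      have "b k \<le> b (?r y0)" using y0(3) k kR by (intro bdec) auto
      moreover have "\<delta> \<le> pmf (P z) y0" using \<delta>le y0(2) by simp
      moreover have "b k \<ge> 0" using bpos[of k] kR by simp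
      ultimately have "\<delta> * b k \<le> pmf (P z) y0 * b (?r y0)" using \<delta>pos by (intro mult_mono) auto
      then show ?thesis by simp
    qed
    finally have "1 + (\<Sum>y\<in>E `` {z}. pmf (P z) y * \<psi> y) \<le> 1 + G - \<delta> * b k" by simp
    also have "\<dots> = \<psi> z" unfolding \<psi>_def k bS by simp
    finally show ?thesis .
  qed
  define g where "g m \<pi> = ennreal (min (ell \<pi>) (real m))" for m and \<pi> :: "'v list"
  have inc: "incseq g" unfolding incseq_def le_fun_def g_def by (auto intro!: ennreal_leI)
  have sup: "(SUP m. g m \<pi>) = ennreal (ell \<pi>)" for \<pi>
  proof (rule antisym)
    show "(SUP m. g m \<pi>) \<le> ennreal (ell \<pi>)" unfolding g_def by (intro SUP_least ennreal_leI) auto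
    have "g (length \<pi>) \<pi> = ennreal (ell \<pi>)" unfolding g_def ell_def by simp
    then show "ennreal (ell \<pi>) \<le> (SUP m. g m \<pi>)" by (metis SUP_upper UNIV_I)
  qed
  have reach1: "reachP P y = 1" for y using reach_one[OF P pos] .
  have bnd: "NI P (g m) z \<le> ennreal (\<psi> z)" for m z
  proof (induction m arbitrary: z)
    case 0
    have "NI P (g 0) z = NI P (\<lambda>_. 0) z" unfolding g_def by (simp add: ell_nonneg)
    also have "\<dots> = 0" unfolding NI_def by simp
    finally show ?case by simp
  next
    case (Suc m)
    show ?case
    proof (cases "z \<in> T")
      case True then show ?thesis by (simp add: NI_T g_def)
    next
      case False
      have "NI P (g (Suc m)) z = (\<Sum>y\<in>E `` {z}. ennreal (pmf (P z) y) *
            (\<integral>\<^sup>+\<pi>. ennreal (pp P \<pi>) * g (Suc m) (z # \<pi>) \<partial>count_space (fplays T E y)))"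
        by (rule NI_step[OF False])
      also have "\<dots> = (\<Sum>y\<in>E `` {z}. ennreal (pmf (P z) y) *
            (\<integral>\<^sup>+\<pi>. ennreal (pp P \<pi>) * (1 + g m \<pi>) \<partial>count_space (fplays T E y)))"
      proof (intro sum.cong refl arg_cong2[where f="(*)"] nn_integral_cong)
        fix y \<pi> assume "\<pi> \<in> space (count_space (fplays T E y))"
        then have ne: "\<pi> \<noteq> []" using fplays_hd[of \<pi> T E y] by simp
        have mn: "min (1 + ell \<pi>) (real (Suc m)) = 1 + min (ell \<pi>) (real m)" by simp
        show "g (Suc m) (z # \<pi>) = 1 + g m \<pi>"
        proof -
          have "ennreal (1 + min (ell \<pi>) (real m)) = 1 + ennreal (min (ell \<pi>) (real m))"
            using ell_nonneg[of \<pi>] by (subst ennreal_plus) auto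
          then show ?thesis unfolding g_def using ell_Cons[OF ne] mn by simp
        qed
      qed
      also have "\<dots> = (\<Sum>y\<in>E `` {z}. ennreal (pmf (P z) y) * (1 + NI P (g m) y))"
        using NI_plus_const reach1 by simp
      also have "\<dots> \<le> (\<Sum>y\<in>E `` {z}. ennreal (pmf (P z) y) * (1 + ennreal (\<psi> y)))"
        by (intro sum_mono mult_left_mono add_left_mono Suc.IH) auto
      also have "\<dots> = ennreal (\<Sum>y\<in>E `` {z}. pmf (P z) y * (1 + \<psi> y))"
        using \<psi>nn by (subst sum_ennreal[symmetric]) (auto simp: ennreal_mult ennreal_plus intro!: sum.cong)
      also have "\<dots> = ennreal (1 + (\<Sum>y\<in>E `` {z}. pmf (P z) y * \<psi> y))"
        using sumP[OF P False] by (simp add: distrib_left sum.distrib)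
      also have "\<dots> \<le> ennreal (\<psi> z)" using super[OF False] by (rule ennreal_leI)
      finally show ?thesis .
    qed
  qed
  have "Lf P x = NI P (\<lambda>\<pi>. SUP m. g m \<pi>) x" unfolding Lf_def sup by simp
  also have "\<dots> = (SUP m. NI P (g m) x)" by (rule NI_SUP[OF inc])
  also have "\<dots> \<le> ennreal (\<psi> x)" by (intro SUP_least bnd)
  finally show ?thesis using order.strict_trans1 ennreal_less_top by blast
qed

definition Kw :: real where "Kw = (\<Sum>a\<in>UNIV. \<Sum>b\<in>UNIV. \<bar>real_of_int (w a b)\<bar>)"

lemma Kw_ge: "\<bar>real_of_int (w a b)\<bar> \<le> Kw"
proof -
  have "\<bar>real_of_int (w a b)\<bar> \<le> (\<Sum>b\<in>UNIV. \<bar>real_of_int (w a b)\<bar>)"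
    by (rule member_le_sum) auto
  also have "\<dots> \<le> Kw" unfolding Kw_def by (rule member_le_sum) (auto intro: sum_nonneg)
  finally show ?thesis .
qed

lemma Kw_nonneg: "Kw \<ge> 0" using Kw_ge[of undefined undefined] by simp

definition Wt :: "'v list \<Rightarrow> real" where "Wt \<pi> = real_of_int (path_weight w \<pi>)"

lemma Wt_bound: "\<bar>Wt \<pi>\<bar> \<le> Kw * ell \<pi>"
proof -
  have "\<bar>Wt \<pi>\<bar> = \<bar>\<Sum>i<length \<pi> - 1. real_of_int (w (\<pi> ! i) (\<pi> ! Suc i))\<bar>"
    unfolding Wt_def path_weight_def by simp
  also have "\<dots> \<le> (\<Sum>i<length \<pi> - 1. \<bar>real_of_int (w (\<pi> ! i) (\<pi> ! Suc i))\<bar>)" by (rule sum_abs)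
  also have "\<dots> \<le> (\<Sum>i<length \<pi> - 1. Kw)" by (intro sum_mono Kw_ge)
  also have "\<dots> = Kw * ell \<pi>" unfolding ell_def by simp
  finally show ?thesis .
qed

lemma Wt_single[simp]: "Wt [x] = 0" unfolding Wt_def path_weight_def by simp

lemma Wt_Cons: "\<pi> \<noteq> [] \<Longrightarrow> Wt (x # \<pi>) = real_of_int (w x (hd \<pi>)) + Wt \<pi>"
  unfolding Wt_def by (simp add: path_weight_Cons)

definition PosP :: "('v \<Rightarrow> 'v pmf) \<Rightarrow> 'v \<Rightarrow> ennreal" where
  "PosP P x = (\<integral>\<^sup>+\<pi>. ennreal (pp P \<pi> * max 0 (Wt \<pi>)) \<partial>count_space (fplays T E x))"

definition NegP :: "('v \<Rightarrow> 'v pmf) \<Rightarrow> 'v \<Rightarrow> ennreal" where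
  "NegP P x = (\<integral>\<^sup>+\<pi>. ennreal (pp P \<pi> * max 0 (- Wt \<pi>)) \<partial>count_space (fplays T E x))"

definition Aux :: "('v \<Rightarrow> 'v pmf) \<Rightarrow> 'v \<Rightarrow> ennreal" where
  "Aux P x = NI P (\<lambda>\<pi>. ennreal (Wt \<pi> + Kw * ell \<pi>)) x"

lemma WK_nonneg: "Wt \<pi> + Kw * ell \<pi> \<ge> 0" using Wt_bound[of \<pi>] by simp

lemma KLf: "(\<integral>\<^sup>+\<pi>. ennreal (pp P \<pi> * (c * ell \<pi>)) \<partial>count_space (fplays T E x)) = ennreal c * Lf P x"
  if "c \<ge> 0" for c
proof -
  have "(\<integral>\<^sup>+\<pi>. ennreal (pp P \<pi> * (c * ell \<pi>)) \<partial>count_space (fplays T E x))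
      = (\<integral>\<^sup>+\<pi>. ennreal c * (ennreal (pp P \<pi>) * ennreal (ell \<pi>)) \<partial>count_space (fplays T E x))"
    using that by (intro nn_integral_cong) (simp add: ennreal_mult pp_nonneg ell_nonneg mult_ac)
  also have "\<dots> = ennreal c * Lf P x" unfolding Lf_def NI_def by (rule nn_integral_cmult) simp
  finally show ?thesis .
qed

lemma Lf_fin_all: "validP P \<Longrightarrow> posT P \<Longrightarrow> ennreal c * Lf P x < top"
  using Lf_finite[of P x] by (simp add: ennreal_mult_less_top)

lemma Pos_finite:
  assumes "validP P" "posT P" shows "PosP P x < top"
proof -
  have "PosP P x \<le> (\<integral>\<^sup>+\<pi>. ennreal (pp P \<pi> * (Kw * ell \<pi>)) \<partial>count_space (fplays T E x))"
    unfolding PosP_def using Wt_bound pp_nonneg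
    by (intro nn_integral_mono ennreal_leI mult_left_mono) (auto simp: abs_le_iff intro!: mult_nonneg_nonneg Kw_nonneg ell_nonneg)
  also have "\<dots> = ennreal Kw * Lf P x" using KLf Kw_nonneg by simp
  finally show ?thesis using Lf_fin_all[OF assms] order.strict_trans1 by blast
qed

lemma Neg_finite:
  assumes "validP P" "posT P" shows "NegP P x < top"
proof -
  have "NegP P x \<le> (\<integral>\<^sup>+\<pi>. ennreal (pp P \<pi> * (Kw * ell \<pi>)) \<partial>count_space (fplays T E x))"
    unfolding NegP_def using Wt_bound pp_nonneg
    by (intro nn_integral_mono ennreal_leI mult_left_mono) (auto simp: abs_le_iff intro!: mult_nonneg_nonneg Kw_nonneg ell_nonneg)
  also have "\<dots> = ennreal Kw * Lf P x" using KLf Kw_nonneg by simp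
  finally show ?thesis using Lf_fin_all[OF assms] order.strict_trans1 by blast
qed

lemma Aux_eq: "Aux P x = (\<integral>\<^sup>+\<pi>. ennreal (pp P \<pi> * (Wt \<pi> + Kw * ell \<pi>)) \<partial>count_space (fplays T E x))"
  unfolding Aux_def NI_def using WK_nonneg by (intro nn_integral_cong) (simp add: ennreal_mult pp_nonneg)

lemma Aux_finite:
  assumes "validP P" "posT P" shows "Aux P x < top"
proof -
  have "Aux P x \<le> (\<integral>\<^sup>+\<pi>. ennreal (pp P \<pi> * ((2 * Kw) * ell \<pi>)) \<partial>count_space (fplays T E x))"
    unfolding Aux_eq using Wt_bound pp_nonneg
    by (intro nn_integral_mono ennreal_leI mult_left_mono) (auto simp: abs_le_iff intro!: mult_nonneg_nonneg Kw_nonneg ell_nonneg)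
  also have "\<dots> = ennreal (2 * Kw) * Lf P x" using KLf Kw_nonneg by simp
  finally show ?thesis using Lf_fin_all[OF assms] order.strict_trans1 by blast
qed

lemma PosNeg_ident: "PosP P x + ennreal Kw * Lf P x = Aux P x + NegP P x"
proof -
  have "PosP P x + ennreal Kw * Lf P x = (\<integral>\<^sup>+\<pi>. ennreal (pp P \<pi> * max 0 (Wt \<pi>)) + ennreal (pp P \<pi> * (Kw * ell \<pi>)) \<partial>count_space (fplays T E x))"
    unfolding PosP_def KLf[OF Kw_nonneg, symmetric] by (rule nn_integral_add[symmetric]) auto
  also have "\<dots> = (\<integral>\<^sup>+\<pi>. ennreal (pp P \<pi> * (Wt \<pi> + Kw * ell \<pi>)) + ennreal (pp P \<pi> * max 0 (- Wt \<pi>)) \<partial>count_space (fplays T E x))"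
  proof (intro nn_integral_cong)
    fix \<pi>
    have a: "pp P \<pi> * max 0 (Wt \<pi>) + pp P \<pi> * (Kw * ell \<pi>) = pp P \<pi> * (Wt \<pi> + Kw * ell \<pi>) + pp P \<pi> * max 0 (- Wt \<pi>)"
      by (simp add: algebra_simps max_def)
    show "ennreal (pp P \<pi> * max 0 (Wt \<pi>)) + ennreal (pp P \<pi> * (Kw * ell \<pi>)) = ennreal (pp P \<pi> * (Wt \<pi> + Kw * ell \<pi>)) + ennreal (pp P \<pi> * max 0 (- Wt \<pi>))"
      using a pp_nonneg[of P \<pi>] Kw_nonneg ell_nonneg[of \<pi>] WK_nonneg[of \<pi>]
      by (simp add: ennreal_plus[symmetric] del: ennreal_plus)
  qed
  also have "\<dots> = Aux P x + NegP P x"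
    unfolding Aux_eq NegP_def by (rule nn_integral_add) auto
  finally show ?thesis .
qed

definition ExV :: "('v \<Rightarrow> 'v pmf) \<Rightarrow> 'v \<Rightarrow> real" where
  "ExV P x = enn2real (PosP P x) - enn2real (NegP P x)"

lemma Ex_alt:
  assumes "validP P" "posT P"
  shows "ExV P x = enn2real (Aux P x) - Kw * enn2real (Lf P x)"
proof -
  have "enn2real (PosP P x + ennreal Kw * Lf P x) = enn2real (Aux P x + NegP P x)" using PosNeg_ident by simp
  then have "enn2real (PosP P x) + Kw * enn2real (Lf P x) = enn2real (Aux P x) + enn2real (NegP P x)"
    using Pos_finite[OF assms] Neg_finite[OF assms] Aux_finite[OF assms] Lf_fin_all[OF assms, of Kw] Lf_finite[OF assms, of x] Kw_nonneg
    by (simp add: enn2real_plus enn2real_mult)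
  then show ?thesis unfolding ExV_def by simp
qed

lemma Aux_step:
  assumes x: "x \<notin> T"
  shows "Aux P x = (\<Sum>y\<in>E `` {x}. ennreal (pmf (P x) y) * (ennreal (real_of_int (w x y) + Kw) * reachP P y + Aux P y))"
proof -
  have "Aux P x = (\<Sum>y\<in>E `` {x}. ennreal (pmf (P x) y) *
            (\<integral>\<^sup>+\<pi>. ennreal (pp P \<pi>) * ennreal (Wt (x # \<pi>) + Kw * ell (x # \<pi>)) \<partial>count_space (fplays T E y)))"
    unfolding Aux_def by (rule NI_step[OF x])
  also have "\<dots> = (\<Sum>y\<in>E `` {x}. ennreal (pmf (P x) y) *
            (\<integral>\<^sup>+\<pi>. ennreal (pp P \<pi>) * (ennreal (real_of_int (w x y) + Kw) + ennreal (Wt \<pi> + Kw * ell \<pi>)) \<partial>count_space (fplays T E y)))"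
  proof (intro sum.cong refl arg_cong2[where f="(*)"] nn_integral_cong)
    fix y \<pi> assume "\<pi> \<in> space (count_space (fplays T E y))"
    then have ne: "\<pi> \<noteq> []" "hd \<pi> = y" using fplays_hd[of \<pi> T E y] by auto
    have "Wt (x # \<pi>) + Kw * ell (x # \<pi>) = (real_of_int (w x y) + Kw) + (Wt \<pi> + Kw * ell \<pi>)"
      using Wt_Cons[OF ne(1)] ell_Cons[OF ne(1)] ne(2) by (simp add: algebra_simps)
    moreover have "real_of_int (w x y) + Kw \<ge> 0" using Kw_ge[of x y] by simp
    ultimately show "ennreal (Wt (x # \<pi>) + Kw * ell (x # \<pi>)) = ennreal (real_of_int (w x y) + Kw) + ennreal (Wt \<pi> + Kw * ell \<pi>)"
      using WK_nonneg[of \<pi>] by (simp add: ennreal_plus)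
  qed
  also have "\<dots> = (\<Sum>y\<in>E `` {x}. ennreal (pmf (P x) y) * (ennreal (real_of_int (w x y) + Kw) * reachP P y + Aux P y))"
    unfolding Aux_def by (intro sum.cong refl arg_cong2[where f="(*)"] NI_plus_const) simp
  finally show ?thesis .
qed

lemma Lf_step:
  assumes x: "x \<notin> T"
  shows "Lf P x = (\<Sum>y\<in>E `` {x}. ennreal (pmf (P x) y) * (1 * reachP P y + Lf P y))"
proof -
  have "Lf P x = (\<Sum>y\<in>E `` {x}. ennreal (pmf (P x) y) *
            (\<integral>\<^sup>+\<pi>. ennreal (pp P \<pi>) * ennreal (ell (x # \<pi>)) \<partial>count_space (fplays T E y)))"
    unfolding Lf_def by (rule NI_step[OF x])
  also have "\<dots> = (\<Sum>y\<in>E `` {x}. ennreal (pmf (P x) y) *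
            (\<integral>\<^sup>+\<pi>. ennreal (pp P \<pi>) * (1 + ennreal (ell \<pi>)) \<partial>count_space (fplays T E y)))"
  proof (intro sum.cong refl arg_cong2[where f="(*)"] nn_integral_cong)
    fix y \<pi> assume "\<pi> \<in> space (count_space (fplays T E y))"
    then have ne: "\<pi> \<noteq> []" using fplays_hd[of \<pi> T E y] by auto
    show "ennreal (ell (x # \<pi>)) = 1 + ennreal (ell \<pi>)"
      using ell_Cons[OF ne] ell_nonneg[of \<pi>] by (simp add: ennreal_plus)
  qed
  also have "\<dots> = (\<Sum>y\<in>E `` {x}. ennreal (pmf (P x) y) * (1 * reachP P y + Lf P y))"
    unfolding Lf_def by (intro sum.cong refl arg_cong2[where f="(*)"] NI_plus_const) simp
  finally show ?thesis .
qed

lemma sum_enn_real: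
  assumes "\<And>y. y \<in> S \<Longrightarrow> X y = ennreal (a y)" "\<And>y. a y \<ge> 0" "\<And>y. c y \<ge> 0" "\<And>y. p y \<ge> 0"
  shows "(\<Sum>y\<in>S. ennreal (p y) * (ennreal (c y) * 1 + X y)) = ennreal (\<Sum>y\<in>S. p y * (c y + a y))"
proof -
  have "(\<Sum>y\<in>S. ennreal (p y) * (ennreal (c y) * 1 + X y)) = (\<Sum>y\<in>S. ennreal (p y * (c y + a y)))"
    using assms by (intro sum.cong refl) (simp add: ennreal_mult ennreal_plus)
  also have "\<dots> = ennreal (\<Sum>y\<in>S. p y * (c y + a y))"
    using assms by (intro sum_ennreal) simp
  finally show ?thesis .
qed

lemma Ex_T: "x \<in> T \<Longrightarrow> ExV P x = 0"
  unfolding ExV_def PosP_def NegP_def by (simp add: fplays_T nn_integral_count_space_finite)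

lemma Ex_step:
  assumes P: "validP P" and pos: "posT P" and x: "x \<notin> T"
  shows "ExV P x = (\<Sum>y\<in>E `` {x}. pmf (P x) y * (real_of_int (w x y) + ExV P y))"
proof -
  have r1: "reachP P y = 1" for y using reach_one[OF P pos] .
  define A where "A y = enn2real (Aux P y)" for y
  define L where "L y = enn2real (Lf P y)" for y
  have Af: "Aux P y = ennreal (A y)" for y unfolding A_def using Aux_finite[OF P pos] by simp
  have Lff: "Lf P y = ennreal (L y)" for y unfolding L_def using Lf_finite[OF P pos] by simp
  have Ann: "A y \<ge> 0" for y unfolding A_def by simp
  have Lnn: "L y \<ge> 0" for y unfolding L_def by simp
  have wK: "real_of_int (w a b) + Kw \<ge> 0" for a b using Kw_ge[of a b] by simp
  have wKA: "0 \<le> (real_of_int (w a b) + Kw) + A y" for a b y using wK Ann by (meson add_nonneg_nonneg)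
  have "ennreal (A x) = (\<Sum>y\<in>E `` {x}. ennreal (pmf (P x) y) * (ennreal (real_of_int (w x y) + Kw) * 1 + Aux P y))"
    using Aux_step[OF x, of P] Af[of x] r1 by simp
  also have "\<dots> = ennreal (\<Sum>y\<in>E `` {x}. pmf (P x) y * ((real_of_int (w x y) + Kw) + A y))"
    by (rule sum_enn_real[where c="\<lambda>y. real_of_int (w x y) + Kw" and a=A]) (auto simp: Af Ann wK)
  finally have Ax: "A x = (\<Sum>y\<in>E `` {x}. pmf (P x) y * ((real_of_int (w x y) + Kw) + A y))"
    using wKA Ann by (subst (asm) ennreal_inj) (auto intro!: sum_nonneg mult_nonneg_nonneg)
  have "ennreal (L x) = (\<Sum>y\<in>E `` {x}. ennreal (pmf (P x) y) * (ennreal 1 * 1 + Lf P y))"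
    using Lf_step[OF x, of P] Lff[of x] r1 by simp
  also have "\<dots> = ennreal (\<Sum>y\<in>E `` {x}. pmf (P x) y * (1 + L y))"
    by (rule sum_enn_real[where c="\<lambda>y. 1" and a=L]) (auto simp: Lff Lnn)
  finally have Lx: "L x = (\<Sum>y\<in>E `` {x}. pmf (P x) y * (1 + L y))"
    using Lnn by (subst (asm) ennreal_inj) (auto intro!: sum_nonneg mult_nonneg_nonneg add_nonneg_nonneg)
  have "ExV P x = A x - Kw * L x" using Ex_alt[OF P pos] unfolding A_def L_def .
  also have "\<dots> = (\<Sum>y\<in>E `` {x}. pmf (P x) y * ((real_of_int (w x y) + Kw) + A y) - Kw * (pmf (P x) y * (1 + L y)))"
    unfolding Ax Lx by (simp add: sum_subtractf sum_distrib_left)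
  also have "\<dots> = (\<Sum>y\<in>E `` {x}. pmf (P x) y * (real_of_int (w x y) + (A y - Kw * L y)))"
    by (intro sum.cong refl) (simp add: algebra_simps)
  also have "\<dots> = (\<Sum>y\<in>E `` {x}. pmf (P x) y * (real_of_int (w x y) + ExV P y))"
    using Ex_alt[OF P pos] unfolding A_def L_def by simp
  finally show ?thesis .
qed

lemma max_principle:
  fixes d :: "'v \<Rightarrow> real"
  assumes P: "validP P" and pos: "posT P"
    and sub: "\<And>x. x \<notin> T \<Longrightarrow> d x \<le> (\<Sum>y\<in>E `` {x}. pmf (P x) y * d y)"
    and bT: "\<And>x. x \<in> T \<Longrightarrow> d x \<le> 0"
  shows "d x \<le> 0"
proof -
  have "- d x \<ge> 0"
  proof (rule min_principle[OF P pos, of "\<lambda>y. - d y"])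
    fix y assume "y \<notin> T"
    then show "(\<Sum>z\<in>E `` {y}. pmf (P y) z * - d z) \<le> - d y" using sub[of y] by (simp add: sum_negf)
  next
    fix y assume "y \<in> T" then show "0 \<le> - d y" using bT by simp
  qed
  then show ?thesis by simp
qed

lemma exp_TP_eq:
  assumes P: "validP (\<lambda>x. if x \<in> VMin then \<rho> x else \<tau> x)" and pos: "posT (\<lambda>x. if x \<in> VMin then \<rho> x else \<tau> x)"
  shows "exp_TP VMin T E w \<rho> \<tau> v = ereal (ExV (\<lambda>x. if x \<in> VMin then \<rho> x else \<tau> x) v)"
proof -
  let ?P = "\<lambda>x. if x \<in> VMin then \<rho> x else \<tau> x"
  have r: "reach_prob VMin T E \<rho> \<tau> v = 1" unfolding reach_prob_eq using reach_one[OF P pos] .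
  have pos_eq: "(\<integral>\<^sup>+ \<pi>. ennreal (path_prob VMin \<rho> \<tau> \<pi> * max 0 (real_of_int (path_weight w \<pi>))) \<partial>count_space (fplays T E v)) = PosP ?P v"
    unfolding PosP_def path_prob_pp Wt_def ..
  have neg_eq: "(\<integral>\<^sup>+ \<pi>. ennreal (path_prob VMin \<rho> \<tau> \<pi> * max 0 (- real_of_int (path_weight w \<pi>))) \<partial>count_space (fplays T E v)) = NegP ?P v"
    unfolding NegP_def path_prob_pp Wt_def ..
  have e1: "enn2ereal (PosP ?P v) = ereal (enn2real (PosP ?P v))"
  proof -
    have "enn2ereal (ennreal (enn2real (PosP ?P v))) = ereal (enn2real (PosP ?P v))" by (rule enn2ereal_ennreal) simp
    then show ?thesis using Pos_finite[OF P pos, of v] by simp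
  qed
  have e2: "enn2ereal (NegP ?P v) = ereal (enn2real (NegP ?P v))"
  proof -
    have "enn2ereal (ennreal (enn2real (NegP ?P v))) = ereal (enn2real (NegP ?P v))" by (rule enn2ereal_ennreal) simp
    then show ?thesis using Neg_finite[OF P pos, of v] by simp
  qed
  have "enn2ereal (PosP ?P v) - enn2ereal (NegP ?P v) = ereal (enn2real (PosP ?P v)) - ereal (enn2real (NegP ?P v))"
    unfolding e1 e2 ..
  then show ?thesis unfolding exp_TP_def r pos_eq neg_eq ExV_def by simp
qed

end



context spg begin

lemma posT_by_rank:
  fixes rk :: "'v \<Rightarrow> nat"
  assumes rk0: "\<forall>x. rk x = 0 \<longleftrightarrow> x \<in> T"
    and st: "\<forall>x. x \<notin> T \<longrightarrow> (\<exists>y. (x, y) \<in> E \<and> pmf (P x) y > 0 \<and> rk y < rk x)"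
  shows "posT P"
proof -
  have "\<forall>x. rk x \<le> k \<longrightarrow> (\<exists>\<pi>\<in>fplays T E x. pp P \<pi> > 0)" for k
  proof (induction k)
    case 0
    show ?case
    proof (intro allI impI)
      fix x assume "rk x \<le> 0" then have "x \<in> T" using rk0 by simp
      then show "\<exists>\<pi>\<in>fplays T E x. pp P \<pi> > 0" by (intro bexI[of _ "[x]"]) (simp_all add: fplays_T)
    qed
  next
    case (Suc k)
    show ?case
    proof (intro allI impI)
      fix x assume xk: "rk x \<le> Suc k"
      show "\<exists>\<pi>\<in>fplays T E x. pp P \<pi> > 0"
      proof (cases "x \<in> T")
        case True then show ?thesis by (intro bexI[of _ "[x]"]) (simp_all add: fplays_T)
      next
        case False
        then obtain y where y: "(x, y) \<in> E" "pmf (P x) y > 0" "rk y < rk x" using st by blast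
        then have "rk y \<le> k" using xk by simp
        then obtain \<pi> where p: "\<pi> \<in> fplays T E y" "pp P \<pi> > 0" using Suc by blast
        have "x # \<pi> \<in> fplays T E x" using fplays_nT[OF False] y(1) p(1) by blast
        moreover have "pp P (x # \<pi>) > 0" using pp_Cons[of \<pi> P x] fplays_hd[OF p(1)] y(2) p(2) by simp
        ultimately show ?thesis by blast
      qed
    qed
  qed
  then show ?thesis unfolding posT_def by blast
qed

lemma ch_valid:
  assumes "mless_strat VMin E \<rho>" "mless_strat VMax E \<tau>"
  shows "validP (\<lambda>x. if x \<in> VMin then \<rho> x else \<tau> x)"
  unfolding validP_def using assms VMax_iff unfolding mless_strat_def by auto

lemma pp_pos_edges:
  assumes "pp P \<pi> > 0" "i < length \<pi> - 1"
  shows "pmf (P (\<pi> ! i)) (\<pi> ! Suc i) > 0"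
proof -
  have "pmf (P (\<pi> ! i)) (\<pi> ! Suc i) \<noteq> 0"
  proof
    assume "pmf (P (\<pi> ! i)) (\<pi> ! Suc i) = 0"
    then have "pp P \<pi> = 0" unfolding pp_def using assms(2) by (intro prod_zero) auto
    then show False using assms(1) by simp
  qed
  then show ?thesis using pmf_nonneg[of "P (\<pi> ! i)" "\<pi> ! Suc i"] by simp
qed

lemma sum_le_support:
  assumes P: "validP P" and x: "x \<notin> T"
    and H: "\<And>y. (x, y) \<in> E \<Longrightarrow> pmf (P x) y > 0 \<Longrightarrow> a y \<le> c"
  shows "(\<Sum>y\<in>E `` {x}. pmf (P x) y * a y) \<le> c"
proof -
  have "(\<Sum>y\<in>E `` {x}. pmf (P x) y * a y) \<le> (\<Sum>y\<in>E `` {x}. pmf (P x) y * c)"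
  proof (intro sum_mono)
    fix y assume y: "y \<in> E `` {x}"
    show "pmf (P x) y * a y \<le> pmf (P x) y * c"
    proof (cases "pmf (P x) y > 0")
      case True then show ?thesis using H y by simp
    next
      case False then have "pmf (P x) y = 0" using pmf_nonneg[of "P x" y] by simp
      then show ?thesis by simp
    qed
  qed
  also have "\<dots> = c" using sumP[OF P x] by (simp add: sum_distrib_right[symmetric])
  finally show ?thesis .
qed

lemma sum_ge_support:
  assumes P: "validP P" and x: "x \<notin> T"
    and H: "\<And>y. (x, y) \<in> E \<Longrightarrow> pmf (P x) y > 0 \<Longrightarrow> c \<le> a y"
  shows "c \<le> (\<Sum>y\<in>E `` {x}. pmf (P x) y * a y)"
proof -
  have "(\<Sum>y\<in>E `` {x}. pmf (P x) y * (- a y)) \<le> - c"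
    using H by (intro sum_le_support[OF P x]) auto
  then show ?thesis by (simp add: sum_negf)
qed

lemma exp_lower:
  assumes P: "validP (\<lambda>x. if x \<in> VMin then \<rho> x else \<tau> x)"
    and W: "\<And>\<pi>. \<pi> \<in> fplays T E v \<Longrightarrow> path_prob VMin \<rho> \<tau> \<pi> > 0 \<Longrightarrow> real_of_int (path_weight w \<pi>) \<ge> c"
  shows "ereal c \<le> exp_TP VMin T E w \<rho> \<tau> v"
proof (cases "reach_prob VMin T E \<rho> \<tau> v < 1")
  case True then show ?thesis by (simp add: exp_TP_def)
next
  case False
  let ?P = "\<lambda>x. if x \<in> VMin then \<rho> x else \<tau> x"
  let ?pp = "path_prob VMin \<rho> \<tau>"
  let ?W = "\<lambda>\<pi>. real_of_int (path_weight w \<pi>)"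
  have r: "reachP ?P v = 1" using False reach_le1[OF P, of v] unfolding reach_prob_eq by (simp add: not_less)
  let ?pos = "\<integral>\<^sup>+\<pi>. ennreal (?pp \<pi> * max 0 (?W \<pi>)) \<partial>count_space (fplays T E v)"
  let ?neg = "\<integral>\<^sup>+\<pi>. ennreal (?pp \<pi> * max 0 (- ?W \<pi>)) \<partial>count_space (fplays T E v)"
  have ppnn: "?pp \<pi> \<ge> 0" for \<pi> unfolding path_prob_pp by (rule pp_nonneg)
  have reach_int: "(\<integral>\<^sup>+\<pi>. ennreal (?pp \<pi>) \<partial>count_space (fplays T E v)) = 1"
    using r unfolding reachP_def NI_def path_prob_pp by simp
  have ex: "exp_TP VMin T E w \<rho> \<tau> v = enn2ereal ?pos - enn2ereal ?neg" unfolding exp_TP_def using False by simp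
  have cint: "(\<integral>\<^sup>+\<pi>. ennreal (d * ?pp \<pi>) \<partial>count_space (fplays T E v)) = ennreal d" if "d \<ge> 0" for d
  proof -
    have "(\<integral>\<^sup>+\<pi>. ennreal (d * ?pp \<pi>) \<partial>count_space (fplays T E v)) = (\<integral>\<^sup>+\<pi>. ennreal d * ennreal (?pp \<pi>) \<partial>count_space (fplays T E v))"
      using that ppnn by (intro nn_integral_cong) (simp add: ennreal_mult)
    also have "\<dots> = ennreal d" using reach_int by (simp add: nn_integral_cmult)
    finally show ?thesis .
  qed
  show ?thesis
  proof (cases "c \<ge> 0")
    case True
    have neg0: "?neg = 0"
    proof (intro nn_integral_zero' AE_I2)
      fix \<pi> assume "\<pi> \<in> space (count_space (fplays T E v))"
      then have p: "\<pi> \<in> fplays T E v" by simp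
      show "ennreal (?pp \<pi> * max 0 (- ?W \<pi>)) = 0"
      proof (cases "?pp \<pi> > 0")
        case True then show ?thesis using W[OF p] \<open>c \<ge> 0\<close> by simp
      next
        case False then show ?thesis using ppnn[of \<pi>] by simp
      qed
    qed
    have "ennreal c = (\<integral>\<^sup>+\<pi>. ennreal (c * ?pp \<pi>) \<partial>count_space (fplays T E v))" using cint True by simp
    also have "\<dots> \<le> ?pos"
    proof (intro nn_integral_mono ennreal_leI)
      fix \<pi> assume "\<pi> \<in> space (count_space (fplays T E v))"
      then have p: "\<pi> \<in> fplays T E v" by simp
      show "c * ?pp \<pi> \<le> ?pp \<pi> * max 0 (?W \<pi>)"
      proof (cases "?pp \<pi> > 0")
        case True then show ?thesis using W[OF p] by (simp add: mult.commute)
      next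
        case False then show ?thesis using ppnn[of \<pi>] by simp
      qed
    qed
    finally have "enn2ereal (ennreal c) \<le> enn2ereal ?pos" by (simp only: less_eq_ennreal.rep_eq)
    then show ?thesis using ex neg0 True by (simp add: zero_ennreal.rep_eq)
  next
    case False
    have "?neg \<le> (\<integral>\<^sup>+\<pi>. ennreal ((- c) * ?pp \<pi>) \<partial>count_space (fplays T E v))"
    proof (intro nn_integral_mono ennreal_leI)
      fix \<pi> assume "\<pi> \<in> space (count_space (fplays T E v))"
      then have p: "\<pi> \<in> fplays T E v" by simp
      show "?pp \<pi> * max 0 (- ?W \<pi>) \<le> (- c) * ?pp \<pi>"
      proof (cases "?pp \<pi> > 0")
        case True
        have m: "max 0 (- ?W \<pi>) \<le> - c" using W[OF p True] False by simp
        then have "?pp \<pi> * max 0 (- ?W \<pi>) \<le> ?pp \<pi> * (- c)" using ppnn[of \<pi>] by (intro mult_left_mono) auto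
        then show ?thesis by (simp add: algebra_simps)
      next
        case False then show ?thesis using ppnn[of \<pi>] by simp
      qed
    qed
    also have "\<dots> = ennreal (- c)" using cint[of "- c"] False by simp
    finally have "enn2ereal ?neg \<le> enn2ereal (ennreal (- c))" by (simp only: less_eq_ennreal.rep_eq)
    then have nb: "enn2ereal ?neg \<le> ereal (- c)" using False by simp
    have "0 - ereal (- c) \<le> enn2ereal ?pos - enn2ereal ?neg"
      by (rule ereal_minus_mono[OF enn2ereal_nonneg nb])
    then show ?thesis using ex by simp
  qed
qed

lemma one_to_two:
  assumes finV: "\<forall>v. Val_d VMax VMin T E w v \<noteq> -\<infinity> \<and> Val_d VMax VMin T E w v \<noteq> \<infinity>"
    and sig: "det_strat VMin E \<sigma>" "memoryless_det \<sigma>" "\<forall>v. Val_sigma VMax VMin T E w \<sigma> v = Val_d VMax VMin T E w v"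
  shows "\<exists>\<rho>. mless_strat VMin E \<rho> \<and> (\<forall>v. Val_m_rho VMax VMin T E w \<rho> v = Val_m_bar VMax VMin T E w v)"
proof -
  let ?V = "Val_d VMax VMin T E w"
  let ?f = "f_iter VMin T E w"
  let ?G = "Gtilde_edges VMin T E w (CARD('v) - 1)"
  from one_to_three[OF finV sig] have feq: "\<forall>v. ?f (CARD('v) - 1) v = ?V v \<and> ?f CARD('v) v = ?V v"
    and sGt: "det_strat VMin ?G \<sigma>" by blast+
  obtain s where s: "\<And>h. h \<noteq> [] \<Longrightarrow> \<sigma> h = s (last h)" using sig(2) unfolding memoryless_det_def by blast
  have sE: "(u, s u) \<in> E" if "u \<in> VMin" for u
    using spec[OF sig(1)[unfolded det_strat_def], of "[u]"] s[of "[u]"] that by simp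
  define \<phi> where "\<phi> v = real_of_ereal (?V v)" for v
  have phi: "ereal (\<phi> v) = ?V v" for v unfolding \<phi>_def using finV[rule_format, of v] by (cases "?V v") auto
  have phif: "?f (CARD('v) - 1) v = ereal (\<phi> v)" "?f CARD('v) v = ereal (\<phi> v)" for v using feq phi by simp_all
  have n: "CARD('v) = Suc (CARD('v) - 1)" using card_pos by simp
  have phiT: "\<phi> t = 0" if "t \<in> T" for t using phif(1)[of t] f_T[OF that] by simp
  have Fmin: "\<phi> u \<le> real_of_int (w u y) + \<phi> y" if "u \<in> VMin" "(u, y) \<in> E" for u y
  proof -
    have "?f CARD('v) u \<le> ereal (of_int (w u y)) + ?f (CARD('v) - 1) y"
      using F_min_le[OF that] n f_Suc by metis
    then show ?thesis using phif by simp
  qed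
  have Fmax: "real_of_int (w x y) + \<phi> y \<le> \<phi> x" if "x \<notin> VMin" "x \<notin> T" "(x, y) \<in> E" for x y
  proof -
    have "ereal (of_int (w x y)) + ?f (CARD('v) - 1) y \<le> ?f CARD('v) x"
      using F_max_ge[OF that] n f_Suc by metis
    then show ?thesis using phif by simp
  qed
  have Fmaxex: "\<exists>y. (x, y) \<in> E \<and> \<phi> x = real_of_int (w x y) + \<phi> y" if xx: "x \<notin> VMin" "x \<notin> T" for x
  proof -
    obtain y where y: "(x, y) \<in> E" "F_op VMin T E w (?f (CARD('v) - 1)) x = ereal (of_int (w x y)) + ?f (CARD('v) - 1) y"
      using F_max_ex[OF xx] by blast
    then have "?f CARD('v) x = ereal (of_int (w x y)) + ?f (CARD('v) - 1) y" using n f_Suc by metis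
    then show ?thesis using phif y(1) by auto
  qed
  have tight: "real_of_int (w u (s u)) + \<phi> (s u) \<le> \<phi> u" if u: "u \<in> VMin" for u
  proof -
    have "(u, \<sigma> [u]) \<in> ?G" using spec[OF sGt[unfolded det_strat_def], of "[u]"] u by simp
    then have "(u, s u) \<in> ?G" using s[of "[u]"] by simp
    then have "ereal (of_int (w u (s u))) + ?f (CARD('v) - 1 - 1) (s u) = ?f (CARD('v) - 1) u"
      unfolding Gtilde_edges_def Etilde_def using u by simp
    moreover have "?f (CARD('v) - 1) (s u) \<le> ?f (CARD('v) - 1 - 1) (s u)" by (rule f_anti) simp
    ultimately have "ereal (of_int (w u (s u))) + ?f (CARD('v) - 1) (s u) \<le> ?f (CARD('v) - 1) u"
      by (metis add_left_mono)
    then show ?thesis using phif by simp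
  qed
  have "\<exists>rk s'. (\<forall>x. rk x = 0 \<longleftrightarrow> x \<in> T) \<and> (\<forall>x. rk x < CARD('v))
     \<and> (\<forall>u\<in>VMin. s' u \<in> {s u} \<and> rk (s' u) < rk u)
     \<and> (\<forall>x. x \<notin> VMin \<longrightarrow> x \<notin> T \<longrightarrow> (\<forall>y. (x, y) \<in> E \<longrightarrow> rk y < rk x))"
  proof (rule attractor)
    fix X assume X: "X \<subseteq> - T" "\<forall>u\<in>X \<inter> VMin. {s u} \<subseteq> X" "\<forall>x\<in>X - VMin. \<exists>y\<in>X. (x, y) \<in> E"
    show "X = {}"
    proof (rule ccontr)
      assume "X \<noteq> {}" then obtain v where v: "v \<in> X" by blast
      obtain \<tau> where tau: "det_strat VMax E \<tau>" "\<forall>h. h \<noteq> [] \<longrightarrow> last h \<in> X \<longrightarrow> last h \<notin> VMin \<longrightarrow> \<tau> h \<in> X"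
        using trap_strategy[OF X(1) X(3)] by blast
      have "\<forall>h. h \<noteq> [] \<longrightarrow> last h \<in> X \<longrightarrow> last h \<in> VMin \<longrightarrow> \<sigma> h \<in> X" using X(2) s by auto
      then have "\<forall>n. play_vertex VMin \<sigma> \<tau> v n \<in> X" using play_stays tau(2) v by blast
      then have "TP_det VMin T w \<sigma> \<tau> v = \<infinity>" using X(1) by (intro TP_nohit) auto
      then have "Val_sigma VMax VMin T E w \<sigma> v = \<infinity>" using TP_le_sigma[OF tau(1), of \<sigma> v] by simp
      then show False using sig(3) finV by metis
    qed
  qed
  then obtain rk where rk0: "\<forall>x. rk x = 0 \<longleftrightarrow> x \<in> T" and "\<forall>x. rk x < CARD('v)"
    and rkmin: "\<forall>u\<in>VMin. rk (s u) < rk u" and rkmax: "\<forall>x. x \<notin> VMin \<longrightarrow> x \<notin> T \<longrightarrow> (\<forall>y. (x, y) \<in> E \<longrightarrow> rk y < rk x)"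
    by (metis singletonD)
  define \<rho> where "\<rho> x = return_pmf (s x)" for x
  have rho: "mless_strat VMin E \<rho>" unfolding mless_strat_def \<rho>_def using sE by auto
  have upper: "exp_TP VMin T E w \<rho> \<tau> v \<le> ereal (\<phi> v)" if tau: "mless_strat VMax E \<tau>" for \<tau> v
  proof -
    let ?P = "\<lambda>x. if x \<in> VMin then \<rho> x else \<tau> x"
    have P: "validP ?P" by (rule ch_valid[OF rho tau])
    have pos: "posT ?P"
    proof (rule posT_by_rank[OF rk0], intro allI impI)
      fix x assume x: "x \<notin> T"
      show "\<exists>y. (x, y) \<in> E \<and> pmf (?P x) y > 0 \<and> rk y < rk x"
      proof (cases "x \<in> VMin")
        case True
        then show ?thesis using sE rkmin by (intro exI[of _ "s x"]) (simp add: \<rho>_def)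
      next
        case False
        obtain y where y: "y \<in> set_pmf (\<tau> x)" using set_pmf_not_empty[of "\<tau> x"] by (meson ex_in_conv)
        have "x \<in> VMax" using False x VMax_iff by simp
        then have e: "(x, y) \<in> E" using tau y unfolding mless_strat_def by auto
        show ?thesis using False y e rkmax x by (intro exI[of _ y]) (simp add: set_pmf_iff)
      qed
    qed
    have "ExV ?P v \<le> \<phi> v"
    proof -
      have "ExV ?P v - \<phi> v \<le> 0"
      proof (rule max_principle[OF P pos, of "\<lambda>y. ExV ?P y - \<phi> y"])
        fix x assume x: "x \<notin> T"
        have le: "(\<Sum>y\<in>E `` {x}. pmf (?P x) y * (real_of_int (w x y) + \<phi> y)) \<le> \<phi> x"
        proof (rule sum_le_support[OF P x])
          fix y assume e: "(x, y) \<in> E" and py: "pmf (?P x) y > 0"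
          show "real_of_int (w x y) + \<phi> y \<le> \<phi> x"
          proof (cases "x \<in> VMin")
            case True
            then have "y = s x" using py by (simp add: \<rho>_def indicator_def split: if_splits)
            then show ?thesis using tight True by simp
          next
            case False then show ?thesis using Fmax x e by simp
          qed
        qed
        have "ExV ?P x - \<phi> x \<le> (\<Sum>y\<in>E `` {x}. pmf (?P x) y * (real_of_int (w x y) + ExV ?P y)) - (\<Sum>y\<in>E `` {x}. pmf (?P x) y * (real_of_int (w x y) + \<phi> y))"
          using Ex_step[OF P pos x] le by simp
        also have "\<dots> = (\<Sum>y\<in>E `` {x}. pmf (?P x) y * (ExV ?P y - \<phi> y))"
          by (simp add: sum_subtractf[symmetric] algebra_simps)
        finally show "ExV ?P x - \<phi> x \<le> (\<Sum>y\<in>E `` {x}. pmf (?P x) y * (ExV ?P y - \<phi> y))" .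
      next
        fix x assume "x \<in> T" then show "ExV ?P x - \<phi> x \<le> 0" using Ex_T phiT by simp
      qed
      then show ?thesis by simp
    qed
    then show ?thesis using exp_TP_eq[OF P pos] by simp
  qed
  define t where "t x = (SOME y. (x, y) \<in> E \<and> \<phi> x = real_of_int (w x y) + \<phi> y)" for x
  have t: "(x, t x) \<in> E \<and> \<phi> x = real_of_int (w x (t x)) + \<phi> (t x)" if "x \<notin> VMin" "x \<notin> T" for x
    unfolding t_def using Fmaxex[OF that] by (rule someI_ex)
  define \<tau>s where "\<tau>s x = return_pmf (t x)" for x
  have taus: "mless_strat VMax E \<tau>s" unfolding mless_strat_def \<tau>s_def using t VMax_iff by auto
  have lower: "ereal (\<phi> v) \<le> Val_m_rho VMax VMin T E w \<rho>' v" if rho': "mless_strat VMin E \<rho>'" for \<rho>' v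
  proof -
    let ?P = "\<lambda>x. if x \<in> VMin then \<rho>' x else \<tau>s x"
    have P: "validP ?P" by (rule ch_valid[OF rho' taus])
    have "ereal (\<phi> v) \<le> exp_TP VMin T E w \<rho>' \<tau>s v"
    proof (rule exp_lower[OF P])
      fix \<pi> assume p: "\<pi> \<in> fplays T E v" and pp: "path_prob VMin \<rho>' \<tau>s \<pi> > 0"
      then have pp': "pp ?P \<pi> > 0" unfolding path_prob_pp by simp
      have ne: "\<pi> \<noteq> []" "hd \<pi> = v" "last \<pi> \<in> T" and ok: "\<forall>i<length \<pi> - 1. \<pi> ! i \<notin> T \<and> (\<pi> ! i, \<pi> ! Suc i) \<in> E"
        using p unfolding fplays_def by auto
      let ?N = "length \<pi> - 1"
      have "\<forall>j<?N. \<phi> (\<pi> ! j) \<le> real_of_int (w (\<pi> ! j) (\<pi> ! Suc j)) + \<phi> (\<pi> ! Suc j)"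
      proof (intro allI impI)
        fix j assume j: "j < ?N"
        have pj: "\<pi> ! j \<notin> T" "(\<pi> ! j, \<pi> ! Suc j) \<in> E" using ok j by auto
        have pos: "pmf (?P (\<pi> ! j)) (\<pi> ! Suc j) > 0" using pp_pos_edges[OF pp' j] .
        show "\<phi> (\<pi> ! j) \<le> real_of_int (w (\<pi> ! j) (\<pi> ! Suc j)) + \<phi> (\<pi> ! Suc j)"
        proof (cases "\<pi> ! j \<in> VMin")
          case True then show ?thesis using Fmin pj by simp
        next
          case False
          then have "\<pi> ! Suc j = t (\<pi> ! j)" using pos by (simp add: \<tau>s_def indicator_def split: if_splits)
          then show ?thesis using t[OF False pj(1)] by simp
        qed
      qed
      from tele_lower[where p="\<lambda>i. \<pi> ! i", OF this]
      have "\<phi> (\<pi> ! 0) \<le> real_of_int (\<Sum>j<?N. w (\<pi> ! j) (\<pi> ! Suc j)) + \<phi> (\<pi> ! ?N)" .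
      moreover have "\<pi> ! 0 = v" using ne by (simp add: hd_conv_nth)
      moreover have "\<pi> ! ?N = last \<pi>" using ne by (simp add: last_conv_nth)
      ultimately show "\<phi> v \<le> real_of_int (path_weight w \<pi>)" using phiT[OF ne(3)] unfolding path_weight_def by simp
    qed
    also have "\<dots> \<le> Val_m_rho VMax VMin T E w \<rho>' v"
      unfolding Val_m_rho_def using taus by (intro SUP_upper) simp
    finally show ?thesis .
  qed
  have "Val_m_rho VMax VMin T E w \<rho> v = Val_m_bar VMax VMin T E w v" for v
  proof (rule antisym)
    have "Val_m_rho VMax VMin T E w \<rho> v \<le> ereal (\<phi> v)"
      unfolding Val_m_rho_def using upper by (intro SUP_least) simp
    also have "\<dots> \<le> Val_m_bar VMax VMin T E w v"
      unfolding Val_m_bar_def using lower by (intro INF_greatest) simp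
    finally show "Val_m_rho VMax VMin T E w \<rho> v \<le> Val_m_bar VMax VMin T E w v" .
  next
    show "Val_m_bar VMax VMin T E w v \<le> Val_m_rho VMax VMin T E w \<rho> v"
      unfolding Val_m_bar_def using rho by (intro INF_lower) simp
  qed
  then show ?thesis using rho by blast
qed

end



context spg begin

lemma reach_pos_path:
  assumes "reachP P x > 0"
  shows "\<exists>\<pi>\<in>fplays T E x. pp P \<pi> > 0"
proof (rule ccontr)
  assume "\<not> ?thesis"
  then have z: "\<forall>\<pi>\<in>fplays T E x. pp P \<pi> = 0" using pp_nonneg by (metis less_eq_real_def)
  have "reachP P x = 0" unfolding reachP_def NI_def
    by (intro nn_integral_zero' AE_I2) (simp add: z)
  then show False using assms by simp
qed

lemma pp_pos_mono:
  assumes "\<forall>x y. pmf (Q x) y > 0 \<longrightarrow> pmf (P x) y > 0" "pp Q \<pi> > 0"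
  shows "pp P \<pi> > 0"
  unfolding pp_def using pp_pos_edges[OF assms(2)] assms(1) by (intro prod_pos) auto

lemma sum_return:
  assumes "finite S" "y \<in> S"
  shows "(\<Sum>z\<in>S. pmf (return_pmf y) z * F z) = F y"
proof -
  have "(\<Sum>z\<in>S. pmf (return_pmf y) z * F z) = (\<Sum>z\<in>S. if z = y then F z else 0)"
    by (intro sum.cong refl) (auto simp: indicator_def)
  also have "\<dots> = F y" using assms by (simp add: sum.delta)
  finally show ?thesis .
qed

lemma Ex_dirac:
  assumes P: "validP P" and pos: "posT P" and x: "x \<notin> T" and Px: "P x = return_pmf y" and e: "(x, y) \<in> E"
  shows "ExV P x = real_of_int (w x y) + ExV P y"
  using Ex_step[OF P pos x] Px sum_return[of "E `` {x}" y] e by simp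

lemma two_to_one:
  assumes mval: "\<forall>v. Val_m_bar VMax VMin T E w v \<noteq> \<infinity>"
    and rho: "mless_strat VMin E \<rho>"
    and opt: "\<forall>v. Val_m_rho VMax VMin T E w \<rho> v = Val_m_bar VMax VMin T E w v"
  shows "\<exists>\<sigma>. det_strat VMin E \<sigma> \<and> memoryless_det \<sigma> \<and>
            (\<forall>v. Val_sigma VMax VMin T E w \<sigma> v = Val_d VMax VMin T E w v)"
proof -
  have rhoE: "set_pmf (\<rho> u) \<subseteq> E `` {u}" if "u \<in> VMin" for u using rho that unfolding mless_strat_def by auto
  have posA: "posT (\<lambda>x. if x \<in> VMin then \<rho> x else \<tau> x)" if tau: "mless_strat VMax E \<tau>" for \<tau>
  proof -
    let ?P = "\<lambda>x. if x \<in> VMin then \<rho> x else \<tau> x"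
    have "\<exists>\<pi>\<in>fplays T E x. pp ?P \<pi> > 0" for x
    proof -
      have le: "exp_TP VMin T E w \<rho> \<tau> x \<le> Val_m_rho VMax VMin T E w \<rho> x"
        unfolding Val_m_rho_def using tau by (intro SUP_upper) simp
      have "exp_TP VMin T E w \<rho> \<tau> x \<noteq> \<infinity>"
      proof
        assume "exp_TP VMin T E w \<rho> \<tau> x = \<infinity>"
        then have "Val_m_rho VMax VMin T E w \<rho> x = \<infinity>" using le by (simp add: top_unique[symmetric])
        then show False using opt mval by simp
      qed
      then have "\<not> reach_prob VMin T E \<rho> \<tau> x < 1" unfolding exp_TP_def by auto
      then have "reachP ?P x \<ge> 1" unfolding reach_prob_eq by simp
      then have "reachP ?P x > 0" using less_le_trans[OF zero_less_one] by blast
      then show ?thesis by (rule reach_pos_path)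
    qed
    then show ?thesis unfolding posT_def by blast
  qed
  define Dset where "Dset = {t :: 'v \<Rightarrow> 'v. \<forall>x. x \<notin> VMin \<longrightarrow> x \<notin> T \<longrightarrow> (x, t x) \<in> E}"
  define \<tau>d where "\<tau>d t = (\<lambda>x. return_pmf (t x))" for t :: "'v \<Rightarrow> 'v"
  have tauD: "mless_strat VMax E (\<tau>d t)" if "t \<in> Dset" for t
    using that VMax_iff unfolding Dset_def mless_strat_def \<tau>d_def by auto
  define ch where "ch t = (\<lambda>x. if x \<in> VMin then \<rho> x else \<tau>d t x)" for t
  have chP: "validP (ch t)" "posT (ch t)" if "t \<in> Dset" for t
    unfolding ch_def using ch_valid[OF rho tauD[OF that]] posA[OF tauD[OF that]] by auto
  define g where "g t = ExV (ch t)" for t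
  have Dfin: "finite Dset" by simp
  define t00 where "t00 x = (SOME y. (x, y) \<in> E)" for x :: 'v
  have "t00 \<in> Dset" unfolding Dset_def t00_def using succ_ex by (auto intro: someI_ex)
  then have Dne: "Dset \<noteq> {}" by auto
  define S where "S t = (\<Sum>x\<in>UNIV. g t x)" for t
  have "Max (S ` Dset) \<in> S ` Dset" using Dfin Dne by (intro Max_in) auto
  then obtain t0 where t0D: "t0 \<in> Dset" and t0m: "S t0 = Max (S ` Dset)" by auto
  have t0max: "S t \<le> S t0" if "t \<in> Dset" for t unfolding t0m using Dfin that by (intro Max_ge) auto
  let ?g = "g t0"
  have P0: "validP (ch t0)" "posT (ch t0)" using chP[OF t0D] by auto
  have t0E: "(x, t0 x) \<in> E" if "x \<notin> VMin" "x \<notin> T" for x using t0D that unfolding Dset_def by auto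
  have B2: "?g u = (\<Sum>y\<in>E `` {u}. pmf (\<rho> u) y * (real_of_int (w u y) + ?g y))" if u: "u \<in> VMin" for u
    using Ex_step[OF P0 VMin_notT[OF u]] u unfolding g_def ch_def by simp
  have B3: "?g x = real_of_int (w x (t0 x)) + ?g (t0 x)" if x: "x \<notin> VMin" "x \<notin> T" for x
    unfolding g_def by (rule Ex_dirac[OF P0 x(2) _ t0E[OF x]]) (simp add: ch_def \<tau>d_def x(1))
  have B1: "real_of_int (w x y) + ?g y \<le> ?g x" if x: "x \<notin> VMin" "x \<notin> T" and e: "(x, y) \<in> E" for x y
  proof (rule ccontr)
    assume less: "\<not> real_of_int (w x y) + ?g y \<le> ?g x"
    define t' where "t' = t0(x := y)"
    have t'D: "t' \<in> Dset" using t0D e unfolding Dset_def t'_def by auto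
    have P': "validP (ch t')" "posT (ch t')" using chP[OF t'D] by auto
    have ge: "?g z \<le> g t' z" for z
    proof -
      have "?g z - g t' z \<le> 0"
      proof (rule max_principle[OF P', of "\<lambda>z. ?g z - g t' z"])
        fix z assume z: "z \<notin> T"
        have le: "?g z \<le> (\<Sum>y\<in>E `` {z}. pmf (ch t' z) y * (real_of_int (w z y) + ?g y))"
        proof (cases "z \<in> VMin")
          case True then show ?thesis using B2[OF True] by (simp add: ch_def)
        next
          case False
          show ?thesis
          proof (cases "z = x")
            case True
            have cz: "ch t' z = return_pmf y" using True False by (simp add: ch_def \<tau>d_def t'_def)
            have "(\<Sum>y'\<in>E `` {z}. pmf (ch t' z) y' * (real_of_int (w z y') + ?g y')) = real_of_int (w x y) + ?g y"
              unfolding cz by (subst sum_return) (use e True in auto)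
            then show ?thesis using less True by simp
          next
            case zx: False
            have cz: "ch t' z = return_pmf (t0 z)" using zx False by (simp add: ch_def \<tau>d_def t'_def)
            have "(\<Sum>y'\<in>E `` {z}. pmf (ch t' z) y' * (real_of_int (w z y') + ?g y')) = real_of_int (w z (t0 z)) + ?g (t0 z)"
              unfolding cz by (subst sum_return) (use t0E[OF False z] in auto)
            then show ?thesis using B3[OF False z] by simp
          qed
        qed
        have "g t' z = (\<Sum>y\<in>E `` {z}. pmf (ch t' z) y * (real_of_int (w z y) + g t' y))"
          unfolding g_def by (rule Ex_step[OF P' z])
        then have "?g z - g t' z \<le> (\<Sum>y\<in>E `` {z}. pmf (ch t' z) y * (real_of_int (w z y) + ?g y)) - (\<Sum>y\<in>E `` {z}. pmf (ch t' z) y * (real_of_int (w z y) + g t' y))"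
          using le by simp
        also have "\<dots> = (\<Sum>y\<in>E `` {z}. pmf (ch t' z) y * (?g y - g t' y))"
          by (simp add: sum_subtractf[symmetric] algebra_simps)
        finally show "?g z - g t' z \<le> (\<Sum>y\<in>E `` {z}. pmf (ch t' z) y * (?g y - g t' y))" .
      next
        fix z assume "z \<in> T" then show "?g z - g t' z \<le> 0" by (simp add: g_def Ex_T)
      qed
      then show ?thesis by simp
    qed
    have "g t' x = real_of_int (w x y) + g t' y"
      unfolding g_def by (rule Ex_dirac[OF P' x(2) _ e]) (simp add: ch_def \<tau>d_def t'_def x(1))
    then have gx: "?g x < g t' x" using ge[of y] less by simp
    have "S t0 < S t'" unfolding S_def
      by (rule sum_strict_mono_ex1) (use ge gx in auto)
    then show False using t0max[OF t'D] by simp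
  qed
  have B4: "ExV (\<lambda>x. if x \<in> VMin then \<rho> x else \<tau> x) z \<le> ?g z" if tau: "mless_strat VMax E \<tau>" for \<tau> z
  proof -
    let ?P = "\<lambda>x. if x \<in> VMin then \<rho> x else \<tau> x"
    have P: "validP ?P" by (rule ch_valid[OF rho tau])
    have pos: "posT ?P" by (rule posA[OF tau])
    have "ExV ?P z - ?g z \<le> 0"
    proof (rule max_principle[OF P pos, of "\<lambda>z. ExV ?P z - ?g z"])
      fix z assume z: "z \<notin> T"
      have le: "(\<Sum>y\<in>E `` {z}. pmf (?P z) y * (real_of_int (w z y) + ?g y)) \<le> ?g z"
      proof (cases "z \<in> VMin")
        case True then show ?thesis using B2[OF True] by simp
      next
        case False
        show ?thesis
        proof (rule sum_le_support[OF P z])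
          fix y assume "(z, y) \<in> E" "pmf (?P z) y > 0"
          then show "real_of_int (w z y) + ?g y \<le> ?g z" using B1[OF False z] by simp
        qed
      qed
      have "ExV ?P z - ?g z \<le> (\<Sum>y\<in>E `` {z}. pmf (?P z) y * (real_of_int (w z y) + ExV ?P y)) - (\<Sum>y\<in>E `` {z}. pmf (?P z) y * (real_of_int (w z y) + ?g y))"
        using Ex_step[OF P pos z] le by simp
      also have "\<dots> = (\<Sum>y\<in>E `` {z}. pmf (?P z) y * (ExV ?P y - ?g y))"
        by (simp add: sum_subtractf[symmetric] algebra_simps)
      finally show "ExV ?P z - ?g z \<le> (\<Sum>y\<in>E `` {z}. pmf (?P z) y * (ExV ?P y - ?g y))" .
    next
      fix z assume "z \<in> T" then show "ExV ?P z - ?g z \<le> 0" by (simp add: g_def Ex_T)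
    qed
    then show ?thesis by simp
  qed
  have Mg: "Val_m_bar VMax VMin T E w v = ereal (?g v)" for v
  proof -
    have "Val_m_rho VMax VMin T E w \<rho> v = ereal (?g v)"
    proof (rule antisym)
      show "Val_m_rho VMax VMin T E w \<rho> v \<le> ereal (?g v)"
        unfolding Val_m_rho_def
      proof (intro SUP_least, simp)
        fix \<tau> assume tau: "mless_strat VMax E \<tau>"
        show "exp_TP VMin T E w \<rho> \<tau> v \<le> ereal (?g v)"
          using exp_TP_eq[OF ch_valid[OF rho tau] posA[OF tau]] B4[OF tau] by simp
      qed
    next
      have "exp_TP VMin T E w \<rho> (\<tau>d t0) v = ereal (?g v)"
        using exp_TP_eq[OF ch_valid[OF rho tauD[OF t0D]] posA[OF tauD[OF t0D]]] unfolding g_def ch_def by simp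
      moreover have "exp_TP VMin T E w \<rho> (\<tau>d t0) v \<le> Val_m_rho VMax VMin T E w \<rho> v"
        unfolding Val_m_rho_def using tauD[OF t0D] by (intro SUP_upper) simp
      ultimately show "ereal (?g v) \<le> Val_m_rho VMax VMin T E w \<rho> v" by simp
    qed
    then show ?thesis using opt by simp
  qed
  have C: "?g u \<le> real_of_int (w u u') + ?g u'" if u: "u \<in> VMin" and e: "(u, u') \<in> E" for u u'
  proof (rule ccontr)
    assume "\<not> ?g u \<le> real_of_int (w u u') + ?g u'"
    define \<gamma> where "\<gamma> = ?g u - (real_of_int (w u u') + ?g u')"
    have \<gamma>pos: "\<gamma> > 0" using \<open>\<not> ?g u \<le> _\<close> unfolding \<gamma>_def by simp
    define mix where "mix = bind_pmf (bernoulli_pmf (1/2)) (\<lambda>b. if b then \<rho> u else return_pmf u')"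
    have pmix: "pmf mix y = pmf (\<rho> u) y / 2 + pmf (return_pmf u') y / 2" for y
      unfolding mix_def pmf_bind by simp
    have smix: "set_pmf mix = set_pmf (\<rho> u) \<union> {u'}"
      unfolding mix_def by (auto simp: set_bind_pmf split: if_splits)
    define \<rho>' where "\<rho>' = \<rho>(u := mix)"
    have rho': "mless_strat VMin E \<rho>'"
      using rho e rhoE[OF u] unfolding mless_strat_def \<rho>'_def by (auto simp: smix)
    have sum_mix: "(\<Sum>y\<in>E `` {u}. pmf mix y * F y) = (\<Sum>y\<in>E `` {u}. pmf (\<rho> u) y * F y) / 2 + F u' / 2" for F
    proof -
      have "(\<Sum>y\<in>E `` {u}. pmf mix y * F y) = (\<Sum>y\<in>E `` {u}. pmf (\<rho> u) y * F y / 2 + pmf (return_pmf u') y * F y / 2)"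
        by (intro sum.cong refl) (simp del: pmf_return add: pmix algebra_simps)
      also have "\<dots> = (\<Sum>y\<in>E `` {u}. pmf (\<rho> u) y * F y) / 2 + (\<Sum>y\<in>E `` {u}. pmf (return_pmf u') y * F y) / 2"
        by (simp del: pmf_return add: sum.distrib sum_divide_distrib)
      also have "(\<Sum>y\<in>E `` {u}. pmf (return_pmf u') y * F y) = F u'"
        by (rule sum_return) (use e in auto)
      finally show ?thesis .
    qed
    have bound: "exp_TP VMin T E w \<rho>' \<tau> u \<le> ereal (?g u - \<gamma> / 2)" if tau: "mless_strat VMax E \<tau>" for \<tau>
    proof -
      let ?P = "\<lambda>x. if x \<in> VMin then \<rho>' x else \<tau> x"
      let ?Q = "\<lambda>x. if x \<in> VMin then \<rho> x else \<tau> x"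
      have P: "validP ?P" by (rule ch_valid[OF rho' tau])
      have mono: "\<forall>x y. pmf (?Q x) y > 0 \<longrightarrow> pmf (?P x) y > 0"
        using u by (auto simp: \<rho>'_def pmix indicator_def add_pos_nonneg)
      have pos: "posT ?P"
        using posA[OF tau] pp_pos_mono[OF mono] unfolding posT_def by blast
      have Pu: "?P u = mix" using u by (simp add: \<rho>'_def)
      have Pu': "\<rho>' u = mix" by (simp add: \<rho>'_def)
      have Exle: "ExV ?P z \<le> ?g z" for z
      proof -
        have "ExV ?P z - ?g z \<le> 0"
        proof (rule max_principle[OF P pos, of "\<lambda>z. ExV ?P z - ?g z"])
          fix z assume z: "z \<notin> T"
          have le: "(\<Sum>y\<in>E `` {z}. pmf (?P z) y * (real_of_int (w z y) + ?g y)) \<le> ?g z"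
          proof (cases "z \<in> VMin")
            case True
            show ?thesis
            proof (cases "z = u")
              case True
              have "(\<Sum>y\<in>E `` {z}. pmf (?P z) y * (real_of_int (w z y) + ?g y))
                  = (\<Sum>y\<in>E `` {u}. pmf (\<rho> u) y * (real_of_int (w u y) + ?g y)) / 2 + (real_of_int (w u u') + ?g u') / 2"
                using True u Pu' sum_mix by simp
              also have "\<dots> = ?g u / 2 + (?g u - \<gamma>) / 2" using B2[OF u] unfolding \<gamma>_def by simp
              also have "\<dots> \<le> ?g u" using \<gamma>pos by (simp add: field_simps)
              finally show ?thesis using True by simp
            next
              case False
              then show ?thesis using B2[OF \<open>z \<in> VMin\<close>] \<open>z \<in> VMin\<close> by (simp add: \<rho>'_def)
            qed
          next
            case False
            show ?thesis
            proof (rule sum_le_support[OF P z])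
              fix y assume "(z, y) \<in> E" "pmf (?P z) y > 0"
              then show "real_of_int (w z y) + ?g y \<le> ?g z" using B1[OF False z] by simp
            qed
          qed
          have "ExV ?P z - ?g z \<le> (\<Sum>y\<in>E `` {z}. pmf (?P z) y * (real_of_int (w z y) + ExV ?P y)) - (\<Sum>y\<in>E `` {z}. pmf (?P z) y * (real_of_int (w z y) + ?g y))"
            using Ex_step[OF P pos z] le by simp
          also have "\<dots> = (\<Sum>y\<in>E `` {z}. pmf (?P z) y * (ExV ?P y - ?g y))"
            by (simp add: sum_subtractf[symmetric] algebra_simps)
          finally show "ExV ?P z - ?g z \<le> (\<Sum>y\<in>E `` {z}. pmf (?P z) y * (ExV ?P y - ?g y))" .
        next
          fix z assume "z \<in> T" then show "ExV ?P z - ?g z \<le> 0" by (simp add: g_def Ex_T)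
        qed
        then show ?thesis by simp
      qed
      have "ExV ?P u = (\<Sum>y\<in>E `` {u}. pmf mix y * (real_of_int (w u y) + ExV ?P y))"
        using Ex_step[OF P pos VMin_notT[OF u]] Pu by simp
      also have "\<dots> \<le> (\<Sum>y\<in>E `` {u}. pmf mix y * (real_of_int (w u y) + ?g y))"
        using Exle by (intro sum_mono mult_left_mono) auto
      also have "\<dots> = (\<Sum>y\<in>E `` {u}. pmf (\<rho> u) y * (real_of_int (w u y) + ?g y)) / 2 + (real_of_int (w u u') + ?g u') / 2"
        by (rule sum_mix)
      also have "\<dots> = ?g u - \<gamma> / 2" using B2[OF u] unfolding \<gamma>_def by (simp add: field_simps)
      finally show ?thesis using exp_TP_eq[OF P pos] by simp
    qed
    have "Val_m_rho VMax VMin T E w \<rho>' u \<le> ereal (?g u - \<gamma> / 2)"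
      unfolding Val_m_rho_def using bound by (intro SUP_least) simp
    moreover have "Val_m_bar VMax VMin T E w u \<le> Val_m_rho VMax VMin T E w \<rho>' u"
      unfolding Val_m_bar_def using rho' by (intro INF_lower) simp
    ultimately have "ereal (?g u) \<le> ereal (?g u - \<gamma> / 2)" using Mg[of u] by (metis order_trans)
    then show False using \<gamma>pos by simp
  qed
  have Dt: "?g u = real_of_int (w u y) + ?g y" if u: "u \<in> VMin" and y: "y \<in> set_pmf (\<rho> u)" for u y
  proof -
    have ye: "y \<in> E `` {u}" using rhoE[OF u] y by auto
    have nn: "\<forall>y'\<in>E `` {u}. 0 \<le> pmf (\<rho> u) y' * (real_of_int (w u y') + ?g y' - ?g u)"
      using C[OF u] by auto
    have "(\<Sum>y'\<in>E `` {u}. pmf (\<rho> u) y' * (real_of_int (w u y') + ?g y' - ?g u))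
        = (\<Sum>y'\<in>E `` {u}. pmf (\<rho> u) y' * (real_of_int (w u y') + ?g y')) - (\<Sum>y'\<in>E `` {u}. pmf (\<rho> u) y') * ?g u"
      by (simp add: right_diff_distrib sum_subtractf sum_distrib_right)
    also have "\<dots> = 0" using B2[OF u] sumP[OF P0(1) VMin_notT[OF u]] u by (simp add: ch_def)
    finally have "\<forall>y'\<in>E `` {u}. pmf (\<rho> u) y' * (real_of_int (w u y') + ?g y' - ?g u) = 0"
      using nn by (subst (asm) sum_nonneg_eq_0_iff) auto
    then have "pmf (\<rho> u) y * (real_of_int (w u y) + ?g y - ?g u) = 0" using ye by blast
    moreover have "pmf (\<rho> u) y > 0" using y by (simp add: pmf_positive)
    ultimately show ?thesis by simp
  qed
  have "\<exists>rk s. (\<forall>x. rk x = 0 \<longleftrightarrow> x \<in> T) \<and> (\<forall>x. rk x < CARD('v))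
     \<and> (\<forall>u\<in>VMin. s u \<in> set_pmf (\<rho> u) \<and> rk (s u) < rk u)
     \<and> (\<forall>x. x \<notin> VMin \<longrightarrow> x \<notin> T \<longrightarrow> (\<forall>y. (x, y) \<in> E \<longrightarrow> rk y < rk x))"
  proof (rule attractor)
    fix X assume X: "X \<subseteq> - T" "\<forall>u\<in>X \<inter> VMin. set_pmf (\<rho> u) \<subseteq> X" "\<forall>x\<in>X - VMin. \<exists>y\<in>X. (x, y) \<in> E"
    show "X = {}"
    proof (rule ccontr)
      assume "X \<noteq> {}" then obtain v where v: "v \<in> X" by blast
      define tX where "tX x = (if x \<in> X \<and> x \<notin> VMin then (SOME y. y \<in> X \<and> (x, y) \<in> E) else (SOME y. (x, y) \<in> E))" for x
      have tXX: "tX x \<in> X \<and> (x, tX x) \<in> E" if "x \<in> X" "x \<notin> VMin" for x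
      proof -
        have "\<exists>y. y \<in> X \<and> (x, y) \<in> E" using X(3) that by blast
        then have "(SOME y. y \<in> X \<and> (x, y) \<in> E) \<in> X \<and> (x, SOME y. y \<in> X \<and> (x, y) \<in> E) \<in> E" by (rule someI_ex)
        then show ?thesis unfolding tX_def using that by simp
      qed
      have tXD: "tX \<in> Dset"
        unfolding Dset_def
      proof (intro CollectI allI impI)
        fix x assume x: "x \<notin> VMin" "x \<notin> T"
        show "(x, tX x) \<in> E"
        proof (cases "x \<in> X")
          case True then show ?thesis using tXX x by blast
        next
          case False
          have "(x, SOME y. (x, y) \<in> E) \<in> E" using succ_ex[OF x(2)] by (rule someI_ex)
          then show ?thesis unfolding tX_def using False by simp
        qed
      qed
      let ?P = "ch tX"
      obtain \<pi> where p: "\<pi> \<in> fplays T E v" "pp ?P \<pi> > 0" using chP(2)[OF tXD] unfolding posT_def by blast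
      have ne: "\<pi> \<noteq> []" "hd \<pi> = v" "last \<pi> \<in> T" and ok: "\<forall>i<length \<pi> - 1. \<pi> ! i \<notin> T \<and> (\<pi> ! i, \<pi> ! Suc i) \<in> E"
        using p(1) unfolding fplays_def by auto
      have inX: "i < length \<pi> \<longrightarrow> \<pi> ! i \<in> X" for i
      proof (induction i)
        case 0 then show ?case using ne v by (simp add: hd_conv_nth)
      next
        case (Suc i)
        show ?case
        proof
          assume i: "Suc i < length \<pi>"
          then have i1: "i < length \<pi> - 1" by simp
          have xi: "\<pi> ! i \<in> X" using Suc i by simp
          have pos: "pmf (?P (\<pi> ! i)) (\<pi> ! Suc i) > 0" using pp_pos_edges[OF p(2) i1] .
          show "\<pi> ! Suc i \<in> X"
          proof (cases "\<pi> ! i \<in> VMin")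
            case True
            then have "\<pi> ! Suc i \<in> set_pmf (\<rho> (\<pi> ! i))" using pos by (simp add: ch_def set_pmf_iff)
            then show ?thesis using X(2) xi True by blast
          next
            case False
            then have "\<pi> ! Suc i = tX (\<pi> ! i)" using pos by (simp add: ch_def \<tau>d_def indicator_def split: if_splits)
            then show ?thesis using tXX[OF xi False] by simp
          qed
        qed
      qed
      have "last \<pi> \<in> X" using inX[of "length \<pi> - 1"] ne by (simp add: last_conv_nth)
      then show False using X(1) ne(3) by blast
    qed
  qed
  then obtain rk s where rk0: "\<forall>x. rk x = 0 \<longleftrightarrow> x \<in> T" and "\<forall>x. rk x < CARD('v)"
    and smin: "\<forall>u\<in>VMin. s u \<in> set_pmf (\<rho> u) \<and> rk (s u) < rk u"
    and rkmax: "\<forall>x. x \<notin> VMin \<longrightarrow> x \<notin> T \<longrightarrow> (\<forall>y. (x, y) \<in> E \<longrightarrow> rk y < rk x)"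
    by blast
  define \<sigma> where "\<sigma> h = s (last h)" for h :: "'v list"
  have sig: "det_strat VMin E \<sigma>" unfolding det_strat_def \<sigma>_def using smin rhoE by blast
  have ml: "memoryless_det \<sigma>" unfolding memoryless_det_def \<sigma>_def by blast
  have gT: "?g t = 0" if "t \<in> T" for t unfolding g_def using Ex_T[OF that] .
  have upper: "Val_sigma VMax VMin T E w \<sigma> v \<le> ereal (?g v)" for v
    unfolding Val_sigma_def
  proof (intro SUP_least, simp)
    fix \<tau> assume tau: "det_strat VMax E \<tau>"
    let ?p = "play_vertex VMin \<sigma> \<tau> v"
    have ps: "?p j \<in> VMin \<Longrightarrow> ?p (Suc j) = s (?p j)" for j
      by (simp add: play_vertex_Suc \<sigma>_def last_play_hist)
    have "\<forall>j. ?p j \<notin> T \<longrightarrow> rk (?p (Suc j)) < rk (?p j)"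
    proof (intro allI impI)
      fix j assume pj: "?p j \<notin> T"
      show "rk (?p (Suc j)) < rk (?p j)"
      proof (cases "?p j \<in> VMin")
        case True then show ?thesis using ps smin by simp
      next
        case False then show ?thesis using rkmax pj play_edge[OF sig tau pj] by blast
      qed
    qed
    from hit_by_rank[OF rk0 this] obtain N where N: "?p N \<in> T" "\<forall>j<N. ?p j \<notin> T" by auto
    have "\<forall>j<N. real_of_int (w (?p j) (?p (Suc j))) + ?g (?p (Suc j)) \<le> ?g (?p j)"
    proof (intro allI impI)
      fix j assume "j < N"
      then have pj: "?p j \<notin> T" using N by simp
      show "real_of_int (w (?p j) (?p (Suc j))) + ?g (?p (Suc j)) \<le> ?g (?p j)"
      proof (cases "?p j \<in> VMin")
        case True
        have "s (?p j) \<in> set_pmf (\<rho> (?p j))" using smin True by blast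
        then show ?thesis using ps[OF True] Dt[OF True] by simp
      next
        case False
        then show ?thesis using B1[OF False pj play_edge[OF sig tau pj]] by simp
      qed
    qed
    from tele_upper[where p="?p", OF this] have "real_of_int (\<Sum>j<N. w (?p j) (?p (Suc j))) \<le> ?g v"
      using gT[OF N(1)] by simp
    then show "TP_det VMin T w \<sigma> \<tau> v \<le> ereal (?g v)" using TP_hit[OF N] by simp
  qed
  have lower: "ereal (?g v) \<le> Val_d VMax VMin T E w v" for v
    unfolding Val_d_def
  proof (intro INF_greatest, simp)
    fix \<sigma>' assume sig': "det_strat VMin E \<sigma>'"
    define \<tau>' where "\<tau>' h = t0 (last h)" for h :: "'v list"
    have tau': "det_strat VMax E \<tau>'" unfolding det_strat_def \<tau>'_def using t0E VMax_iff by blast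
    let ?p = "play_vertex VMin \<sigma>' \<tau>' v"
    have "ereal (?g v) \<le> TP_det VMin T w \<sigma>' \<tau>' v"
    proof (cases "\<exists>n. ?p n \<in> T")
      case False then show ?thesis using TP_nohit[of VMin \<sigma>' \<tau>' v T w] by simp
    next
      case True
      define N where "N = (LEAST n. ?p n \<in> T)"
      have N: "?p N \<in> T" "\<forall>j<N. ?p j \<notin> T" unfolding N_def using True
        by (auto intro: LeastI_ex dest: not_less_Least)
      have "\<forall>j<N. ?g (?p j) \<le> real_of_int (w (?p j) (?p (Suc j))) + ?g (?p (Suc j))"
      proof (intro allI impI)
        fix j assume "j < N"
        then have pj: "?p j \<notin> T" using N by simp
        have e: "(?p j, ?p (Suc j)) \<in> E" using play_edge[OF sig' tau' pj] .
        show "?g (?p j) \<le> real_of_int (w (?p j) (?p (Suc j))) + ?g (?p (Suc j))"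
        proof (cases "?p j \<in> VMin")
          case True then show ?thesis using C[OF True e] by simp
        next
          case False
          then have "?p (Suc j) = t0 (?p j)" by (simp add: play_vertex_Suc \<tau>'_def last_play_hist)
          then show ?thesis using B3[OF False pj] by simp
        qed
      qed
      from tele_lower[where p="?p", OF this] have "?g v \<le> real_of_int (\<Sum>j<N. w (?p j) (?p (Suc j)))"
        using gT[OF N(1)] by simp
      then show ?thesis using TP_hit[OF N] by simp
    qed
    also have "\<dots> \<le> Val_sigma VMax VMin T E w \<sigma>' v" by (rule TP_le_sigma[OF tau'])
    finally show "ereal (?g v) \<le> Val_sigma VMax VMin T E w \<sigma>' v" .
  qed
  have "Val_sigma VMax VMin T E w \<sigma> v = Val_d VMax VMin T E w v" for v
  proof (rule antisym)
    show "Val_sigma VMax VMin T E w \<sigma> v \<le> Val_d VMax VMin T E w v" using upper[of v] lower[of v] by (rule order_trans)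
    show "Val_d VMax VMin T E w v \<le> Val_sigma VMax VMin T E w \<sigma> v" by (rule Val_d_le_sigma[OF sig])
  qed
  then show ?thesis using sig ml by blast
qed

end


theorem proposition24:
  fixes VMax VMin T :: "'v::finite set"
    and E :: "('v \<times> 'v) set"
    and w :: "'v \<Rightarrow> 'v \<Rightarrow> int"
  assumes game: "sp_game VMax VMin T E"
    and fin_val: "\<forall>v. Val_d VMax VMin T E w v \<noteq> -\<infinity> \<and> Val_d VMax VMin T E w v \<noteq> \<infinity>"
    and mval: "\<forall>v. Val_m_bar VMax VMin T E w v \<noteq> \<infinity>"
  shows "((\<exists>\<sigma>. det_strat VMin E \<sigma> \<and> memoryless_det \<sigma> \<and>
            (\<forall>v. Val_sigma VMax VMin T E w \<sigma> v = Val_d VMax VMin T E w v))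
          \<longleftrightarrow>
          (\<exists>\<rho>. mless_strat VMin E \<rho> \<and>
            (\<forall>v. Val_m_rho VMax VMin T E w \<rho> v = Val_m_bar VMax VMin T E w v)))
       \<and>
         ((\<exists>\<rho>. mless_strat VMin E \<rho> \<and>
            (\<forall>v. Val_m_rho VMax VMin T E w \<rho> v = Val_m_bar VMax VMin T E w v))
          \<longleftrightarrow>
          ((\<forall>v. f_iter VMin T E w (CARD('v) - 1) v = Val_d VMax VMin T E w v
                \<and> f_iter VMin T E w (CARD('v)) v = Val_d VMax VMin T E w v)
           \<and> (\<exists>\<sigma>. det_strat VMin (Gtilde_edges VMin T E w (CARD('v) - 1)) \<sigma> \<and>
                 (\<forall>v \<tau>. det_strat VMax (Gtilde_edges VMin T E w (CARD('v) - 1)) \<tau> \<longrightarrow>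
                        (\<exists>n. play_vertex VMin \<sigma> \<tau> v n \<in> T)))))"
proof -
  interpret spg VMax VMin T E w by unfold_locales (rule game)
  let ?S1 = "\<exists>\<sigma>. det_strat VMin E \<sigma> \<and> memoryless_det \<sigma> \<and>
            (\<forall>v. Val_sigma VMax VMin T E w \<sigma> v = Val_d VMax VMin T E w v)"
  let ?S2 = "\<exists>\<rho>. mless_strat VMin E \<rho> \<and>
            (\<forall>v. Val_m_rho VMax VMin T E w \<rho> v = Val_m_bar VMax VMin T E w v)"
  let ?S3 = "(\<forall>v. f_iter VMin T E w (CARD('v) - 1) v = Val_d VMax VMin T E w v
                \<and> f_iter VMin T E w (CARD('v)) v = Val_d VMax VMin T E w v)
           \<and> (\<exists>\<sigma>. det_strat VMin (Gtilde_edges VMin T E w (CARD('v) - 1)) \<sigma> \<and>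
                 (\<forall>v \<tau>. det_strat VMax (Gtilde_edges VMin T E w (CARD('v) - 1)) \<tau> \<longrightarrow>
                        (\<exists>n. play_vertex VMin \<sigma> \<tau> v n \<in> T)))"
  have i12: "?S1 \<Longrightarrow> ?S2"
  proof -
    assume ?S1
    then obtain \<sigma> where "det_strat VMin E \<sigma>" "memoryless_det \<sigma>"
      "\<forall>v. Val_sigma VMax VMin T E w \<sigma> v = Val_d VMax VMin T E w v" by blast
    then show ?S2 using one_to_two[OF fin_val] by blast
  qed
  have i21: "?S2 \<Longrightarrow> ?S1"
  proof -
    assume ?S2
    then obtain \<rho> where "mless_strat VMin E \<rho>"
      "\<forall>v. Val_m_rho VMax VMin T E w \<rho> v = Val_m_bar VMax VMin T E w v" by blast
    then show ?S1 using two_to_one[OF mval] by blast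
  qed
  have i13: "?S1 \<Longrightarrow> ?S3"
  proof -
    assume ?S1
    then obtain \<sigma> where s: "det_strat VMin E \<sigma>" "memoryless_det \<sigma>"
      "\<forall>v. Val_sigma VMax VMin T E w \<sigma> v = Val_d VMax VMin T E w v" by blast
    from one_to_three[OF fin_val s] show ?S3 by blast
  qed
  have i31: "?S3 \<Longrightarrow> ?S1"
  proof -
    assume S3: ?S3
    then obtain \<sigma> where "det_strat VMin (Gtilde_edges VMin T E w (CARD('v) - 1)) \<sigma>"
      "\<forall>v \<tau>. det_strat VMax (Gtilde_edges VMin T E w (CARD('v) - 1)) \<tau> \<longrightarrow> (\<exists>n. play_vertex VMin \<sigma> \<tau> v n \<in> T)"
      by blast
    then show ?S1 using three_to_one[OF fin_val] S3 by blast
  qed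
  show ?thesis using i12 i21 i13 i31 by blast
qed

end
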